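(* Let $H$ be a connected graph and $G=L(H)$. Then $G$ is localizable if and only if one of the following holds: (1) $H$ is not isomorphic to any of $K_3$, $K_4$, the diamond, and the pendant reduction $F$ of $H$ is a connected bipartite graph with a bipartition of $V(F)$ into independent sets $U$ and $W$ such that (a) $R_{\diamond}(H)\cup R_{K_4}(H)\subseteq U$, (b) $R_{\triangle}(H)\subseteq W$, and (c) every vertex $u\in U\setminus R_{K_4}(H)$ is strong in the graph $F-(N_F(u)\cap R_{\triangle}(H))$; (2) $H$ is isomorphic to $K_3$ or to $K_4$.
   Context: $L(H)$ is the line graph of $H$. A clique is strong if it intersects every maximal independent set; a graph is localizable if its vertex set admits a partition into strong cliques. A vertex $v$ of a graph is strong if every maximal matching of that graph covers $v$. The diamond is the graph with vertices $a,b,c,d$ and edges $ab,ac,bc,bd,cd$, with tips $a,d$. Let $d_H$ denote degree in $H$. For a triangle with vertices $a,b,c$ in $H$: it is a pendant triangle if $d_H(a)=d_H(b)=2<d_H(c)$, with root $c$; a pendant diamond is a set of vertices $a,b,c,d$ of $H$ inducing a diamond with tips $a,d$ such that $d_H(a)=2$ and $d_H(b)=d_H(c)=3\le d_H(d)$, with root $d$; a pendant $K_4$ is a set of vertices $a,b,c,d$ inducing $K_4$ with $d_H(a)=d_H(b)=d_H(c)=3<d_H(d)$, with root $d$. These are the pendant subgraphs of $H$. $R_{\triangle}(H)$, $R_{\diamond}(H)$, $R_{K_4}(H)$ denote the sets of roots of all pendant triangles, pendant diamonds, and pendant $K_4$s of $H$, respectively. The pendant reduction of $H$ is the graph obtained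 from $H$ by deleting all non-root vertices of all its pendant subgraphs. $N_F(u)$ is the neighborhood of $u$ in $F$. *)

theory Defs
  imports Main "HOL-Library.Disjoint_Sets"
begin

definition graph :: "'a set \<Rightarrow> 'a set set \<Rightarrow> bool" where
  "graph V E \<longleftrightarrow> finite V \<and> (\<forall>e\<in>E. \<exists>u v. u \<noteq> v \<and> e = {u, v} \<and> u \<in> V \<and> v \<in> V)"

definition nbhd :: "'a set \<Rightarrow> 'a set set \<Rightarrow> 'a \<Rightarrow> 'a set" where
  "nbhd V E u = {v \<in> V. {u, v} \<in> E}"

definition deg :: "'a set \<Rightarrow> 'a set set \<Rightarrow> 'a \<Rightarrow> nat" where
  "deg V E u = card (nbhd V E u)"

definition connected_graph :: "'a set \<Rightarrow> 'a set set \<Rightarrow> bool" where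
  "connected_graph V E \<longleftrightarrow> V \<noteq> {} \<and>
     (\<forall>u\<in>V. \<forall>v\<in>V. (u, v) \<in> {(x, y). {x, y} \<in> E}\<^sup>*)"

definition clique :: "'a set \<Rightarrow> 'a set set \<Rightarrow> 'a set \<Rightarrow> bool" where
  "clique V E C \<longleftrightarrow> C \<subseteq> V \<and> (\<forall>u\<in>C. \<forall>v\<in>C. u \<noteq> v \<longrightarrow> {u, v} \<in> E)"

definition independent :: "'a set \<Rightarrow> 'a set set \<Rightarrow> 'a set \<Rightarrow> bool" where
  "independent V E S \<longleftrightarrow> S \<subseteq> V \<and> (\<forall>u\<in>S. \<forall>v\<in>S. {u, v} \<notin> E)"

definition maximal_independent :: "'a set \<Rightarrow> 'a set set \<Rightarrow> 'a set \<Rightarrow> bool" where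
  "maximal_independent V E S \<longleftrightarrow> independent V E S \<and>
     (\<forall>T. independent V E T \<and> S \<subseteq> T \<longrightarrow> T = S)"

definition strong_clique :: "'a set \<Rightarrow> 'a set set \<Rightarrow> 'a set \<Rightarrow> bool" where
  "strong_clique V E C \<longleftrightarrow> clique V E C \<and>
     (\<forall>S. maximal_independent V E S \<longrightarrow> C \<inter> S \<noteq> {})"

definition localizable :: "'a set \<Rightarrow> 'a set set \<Rightarrow> bool" where
  "localizable V E \<longleftrightarrow> (\<exists>P. partition_on V P \<and> (\<forall>C\<in>P. strong_clique V E C))"

definition matching :: "'a set set \<Rightarrow> 'a set set \<Rightarrow> bool" where
  "matching E M \<longleftrightarrow> M \<subseteq> E \<and> (\<forall>e\<in>M. \<forall>f\<in>M. e \<noteq> f \<longrightarrow> e \<inter> f = {})"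

definition maximal_matching :: "'a set set \<Rightarrow> 'a set set \<Rightarrow> bool" where
  "maximal_matching E M \<longleftrightarrow> matching E M \<and> (\<forall>M'. matching E M' \<and> M \<subseteq> M' \<longrightarrow> M' = M)"

definition strong_vertex :: "'a set \<Rightarrow> 'a set set \<Rightarrow> 'a \<Rightarrow> bool" where
  "strong_vertex V E v \<longleftrightarrow> v \<in> V \<and> (\<forall>M. maximal_matching E M \<longrightarrow> v \<in> \<Union>M)"

definition line_edges :: "'a set set \<Rightarrow> 'a set set set" where
  "line_edges E = {{e, f} | e f. e \<in> E \<and> f \<in> E \<and> e \<noteq> f \<and> e \<inter> f \<noteq> {}}"

definition del_V :: "'a set \<Rightarrow> 'a set \<Rightarrow> 'a set" where
  "del_V V X = V - X"

definition del_E :: "'a set set \<Rightarrow> 'a set \<Rightarrow> 'a set set" where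
  "del_E E X = {e \<in> E. e \<inter> X = {}}"

definition bipartition :: "'a set \<Rightarrow> 'a set set \<Rightarrow> 'a set \<Rightarrow> 'a set \<Rightarrow> bool" where
  "bipartition V E U W \<longleftrightarrow> U \<inter> W = {} \<and> U \<union> W = V \<and> independent V E U \<and> independent V E W"

definition isomorphic :: "'a set \<Rightarrow> 'a set set \<Rightarrow> 'b set \<Rightarrow> 'b set set \<Rightarrow> bool" where
  "isomorphic V E V' E' \<longleftrightarrow> (\<exists>f. bij_betw f V V' \<and>
     (\<forall>u\<in>V. \<forall>v\<in>V. {u, v} \<in> E \<longleftrightarrow> {f u, f v} \<in> E'))"

definition K_V :: "nat \<Rightarrow> nat set" where
  "K_V n = {0..<n}"

definition K_E :: "nat \<Rightarrow> nat set set" where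
  "K_E n = {{i, j} | i j. i < n \<and> j < n \<and> i \<noteq> j}"

text \<open>Diamond on a=0, b=1, c=2, d=3 with edges ab, ac, bc, bd, cd.\<close>
definition diamond_V :: "nat set" where
  "diamond_V = {0, 1, 2, 3}"

definition diamond_E :: "nat set set" where
  "diamond_E = {{0, 1}, {0, 2}, {1, 2}, {1, 3}, {2, 3}}"

definition pendant_triangle :: "'a set \<Rightarrow> 'a set set \<Rightarrow> 'a \<Rightarrow> 'a \<Rightarrow> 'a \<Rightarrow> bool" where
  "pendant_triangle V E a b c \<longleftrightarrow> a \<in> V \<and> b \<in> V \<and> c \<in> V \<and> a \<noteq> b \<and> a \<noteq> c \<and> b \<noteq> c \<and>
     {a, b} \<in> E \<and> {a, c} \<in> E \<and> {b, c} \<in> E \<and>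
     deg V E a = 2 \<and> deg V E b = 2 \<and> 2 < deg V E c"

definition pendant_diamond :: "'a set \<Rightarrow> 'a set set \<Rightarrow> 'a \<Rightarrow> 'a \<Rightarrow> 'a \<Rightarrow> 'a \<Rightarrow> bool" where
  "pendant_diamond V E a b c d \<longleftrightarrow> a \<in> V \<and> b \<in> V \<and> c \<in> V \<and> d \<in> V \<and>
     distinct [a, b, c, d] \<and>
     {a, b} \<in> E \<and> {a, c} \<in> E \<and> {b, c} \<in> E \<and> {b, d} \<in> E \<and> {c, d} \<in> E \<and> {a, d} \<notin> E \<and>
     deg V E a = 2 \<and> deg V E b = 3 \<and> deg V E c = 3 \<and> 3 \<le> deg V E d"

definition pendant_K4 :: "'a set \<Rightarrow> 'a set set \<Rightarrow> 'a \<Rightarrow> 'a \<Rightarrow> 'a \<Rightarrow> 'a \<Rightarrow> bool" where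
  "pendant_K4 V E a b c d \<longleftrightarrow> a \<in> V \<and> b \<in> V \<and> c \<in> V \<and> d \<in> V \<and>
     distinct [a, b, c, d] \<and>
     {a, b} \<in> E \<and> {a, c} \<in> E \<and> {a, d} \<in> E \<and> {b, c} \<in> E \<and> {b, d} \<in> E \<and> {c, d} \<in> E \<and>
     deg V E a = 3 \<and> deg V E b = 3 \<and> deg V E c = 3 \<and> 3 < deg V E d"

definition R_tri :: "'a set \<Rightarrow> 'a set set \<Rightarrow> 'a set" where
  "R_tri V E = {c. \<exists>a b. pendant_triangle V E a b c}"

definition R_dia :: "'a set \<Rightarrow> 'a set set \<Rightarrow> 'a set" where
  "R_dia V E = {d. \<exists>a b c. pendant_diamond V E a b c d}"

definition R_K4 :: "'a set \<Rightarrow> 'a set set \<Rightarrow> 'a set" where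
  "R_K4 V E = {d. \<exists>a b c. pendant_K4 V E a b c d}"

definition pendant_nonroots :: "'a set \<Rightarrow> 'a set set \<Rightarrow> 'a set" where
  "pendant_nonroots V E =
     {x. \<exists>a b c. pendant_triangle V E a b c \<and> x \<in> {a, b}} \<union>
     {x. \<exists>a b c d. pendant_diamond V E a b c d \<and> x \<in> {a, b, c}} \<union>
     {x. \<exists>a b c d. pendant_K4 V E a b c d \<and> x \<in> {a, b, c}}"

definition pr_V :: "'a set \<Rightarrow> 'a set set \<Rightarrow> 'a set" where
  "pr_V V E = del_V V (pendant_nonroots V E)"

definition pr_E :: "'a set \<Rightarrow> 'a set set \<Rightarrow> 'a set set" where
  "pr_E V E = del_E E (pendant_nonroots V E)"

end

theory Submission
  imports Defs
begin

lemma card2_eq: "finite A \<Longrightarrow> x \<in> A \<Longrightarrow> y \<in> A \<Longrightarrow> x \<noteq> y \<Longrightarrow> card A = 2 \<Longrightarrow> A = {x,y}"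
  by (metis card_2_iff card_seteq empty_subsetI finite.emptyI finite_insert insert_subset order_refl)

lemma card3_eq: "finite A \<Longrightarrow> x \<in> A \<Longrightarrow> y \<in> A \<Longrightarrow> z \<in> A \<Longrightarrow> distinct [x,y,z] \<Longrightarrow> card A = 3 \<Longrightarrow> A = {x,y,z}"
proof -
  assume a: "finite A" "x \<in> A" "y \<in> A" "z \<in> A" "distinct [x,y,z]" "card A = 3"
  have "card {x,y,z} = 3" using a(5) by auto
  moreover have "{x,y,z} \<subseteq> A" using a by auto
  ultimately show ?thesis using a(1,6) by (metis card_subset_eq)
qed

lemma card_le2: "A \<subseteq> {x,y} \<Longrightarrow> card A \<le> 2"
proof -
  assume "A \<subseteq> {x,y}"
  then have "card A \<le> card {x,y}" by (simp add: card_mono)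
  moreover have "card {x,y} \<le> 2" by (cases "x=y") auto
  ultimately show ?thesis by linarith
qed

lemma card_le3: "A \<subseteq> {x,y,z} \<Longrightarrow> card A \<le> 3"
proof -
  assume "A \<subseteq> {x,y,z}"
  then have "card A \<le> card {x,y,z}" by (simp add: card_mono)
  moreover have "card {x,y,z} \<le> 3" by (simp add: card_insert_le_m1)
  ultimately show ?thesis by linarith
qed

lemma tri_meet:
  assumes "p \<noteq> q" "a \<noteq> b" "a \<noteq> c" "b \<noteq> c" "{p,q} \<inter> {a,b} \<noteq> {}" "{p,q} \<inter> {b,c} \<noteq> {}" "{p,q} \<inter> {a,c} \<noteq> {}"
  shows "{p,q} \<in> {{a,b},{a,c},{b,c}}"
proof -
  have "{p,q} \<subseteq> {a,b,c}" using assms by blast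
  then have p: "p = a \<or> p = b \<or> p = c" and q: "q = a \<or> q = b \<or> q = c" by auto
  show ?thesis using p q assms(1) by (elim disjE) (simp_all add: insert_commute)
qed

lemma card3_ex: assumes "card S = 3" shows "\<exists>x y z. S = {x,y,z} \<and> distinct [x,y,z]"
proof -
  have "card S = Suc 2" using assms by simp
  then obtain b B where h: "S = insert b B" "b \<notin> B" "card B = 2" unfolding card_Suc_eq by blast
  then obtain x y where "B = {x,y}" "x \<noteq> y" unfolding card_2_iff by blast
  then show ?thesis using h by auto
qed

lemma card4_ex: assumes "card S = 4" shows "\<exists>x y z w. S = {x,y,z,w} \<and> distinct [x,y,z,w]"
proof -
  have "card S = Suc 3" using assms by simp
  then obtain b B where h: "S = insert b B" "b \<notin> B" "card B = 3" unfolding card_Suc_eq by blast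
  then obtain x y z where "B = {x,y,z}" "distinct [x,y,z]" using card3_ex by blast
  then show ?thesis using h by auto
qed

lemma matching_extend:
  assumes "finite E" "matching E M"
  shows "\<exists>M'. maximal_matching E M' \<and> M \<subseteq> M'"
proof -
  let ?A = "{M'. matching E M' \<and> M \<subseteq> M'}"
  have "?A \<subseteq> Pow E" by (auto simp: matching_def)
  then have "finite ?A" using assms(1) by (meson finite_Pow_iff finite_subset)
  moreover have "M \<in> ?A" using assms(2) by simp
  ultimately obtain m where m: "m \<in> ?A" "\<forall>b\<in>?A. m \<le> b \<longrightarrow> m = b"
    using finite_has_maximal2[of ?A M] by auto
  then have "maximal_matching E m" unfolding maximal_matching_def
    using subset_trans[of M m] by blast
  then show ?thesis using m by blast
qed

definition twosets :: "'a set set \<Rightarrow> bool" where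
  "twosets E \<longleftrightarrow> (\<forall>e\<in>E. \<exists>x y. x \<noteq> y \<and> e = {x,y})"

lemma not_strongI:
  assumes "finite E" "twosets E" "matching E M" "u \<notin> \<Union>M" "\<forall>v. {u,v} \<in> E \<longrightarrow> v \<in> \<Union>M"
  shows "\<exists>M'. maximal_matching E M' \<and> u \<notin> \<Union>M'"
proof -
  obtain M' where M': "maximal_matching E M'" "M \<subseteq> M'" using matching_extend assms by blast
  have "u \<notin> \<Union>M'"
  proof
    assume "u \<in> \<Union>M'"
    then obtain e where e: "e \<in> M'" "u \<in> e" by auto
    have "e \<in> E" using e M' by (auto simp: maximal_matching_def matching_def)
    then obtain v where v: "e = {u,v}" using assms(2) e(2) unfolding twosets_def
      by (metis insert_commute insert_iff singletonD)
    then have "v \<in> \<Union>M" using assms(5) \<open>e \<in> E\<close> by auto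
    then obtain f where f: "f \<in> M" "v \<in> f" by auto
    have "u \<notin> f" using f assms(4) by auto
    then have "e \<noteq> f" using e by auto
    moreover have "f \<in> M'" using f M' by auto
    ultimately have "e \<inter> f = {}" using e(1) M' by (auto simp: maximal_matching_def matching_def)
    then show False using v f by auto
  qed
  then show ?thesis using M' by blast
qed

lemma not_strongD:
  assumes "twosets E" "maximal_matching E M" "u \<notin> \<Union>M" "{u,v} \<in> E"
  shows "v \<in> \<Union>M"
proof (rule ccontr)
  assume nv: "v \<notin> \<Union>M"
  have uv: "u \<noteq> v" using assms(1,4) unfolding twosets_def by (metis doubleton_eq_iff insert_absorb2)
  let ?M = "insert {u,v} M"
  have "matching E ?M" using assms(2,3,4) nv unfolding maximal_matching_def matching_def by blast
  moreover have "{u,v} \<notin> M" using assms(3) by auto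
  ultimately show False using assms(2) unfolding maximal_matching_def by blast
qed

lemma strong_iff:
  assumes "finite E" "twosets E"
  shows "(\<forall>M. maximal_matching E M \<longrightarrow> u \<in> \<Union>M) \<longleftrightarrow>
     \<not>(\<exists>M. matching E M \<and> u \<notin> \<Union>M \<and> (\<forall>v. {u,v} \<in> E \<longrightarrow> v \<in> \<Union>M))"
proof
  assume h: "\<forall>M. maximal_matching E M \<longrightarrow> u \<in> \<Union>M"
  show "\<not>(\<exists>M. matching E M \<and> u \<notin> \<Union>M \<and> (\<forall>v. {u,v} \<in> E \<longrightarrow> v \<in> \<Union>M))"
    using not_strongI[OF assms] h by metis
next
  assume h: "\<not>(\<exists>M. matching E M \<and> u \<notin> \<Union>M \<and> (\<forall>v. {u,v} \<in> E \<longrightarrow> v \<in> \<Union>M))"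
  show "\<forall>M. maximal_matching E M \<longrightarrow> u \<in> \<Union>M"
  proof (intro allI impI, rule ccontr)
    fix M assume M: "maximal_matching E M" "u \<notin> \<Union>M"
    then have "matching E M" by (simp add: maximal_matching_def)
    moreover have "\<forall>v. {u,v} \<in> E \<longrightarrow> v \<in> \<Union>M" using not_strongD[OF assms(2) M] by blast
    ultimately show False using h M(2) by blast
  qed
qed

locale sg =
  fixes V :: "'a set" and E :: "'a set set"
  assumes G: "graph V E"
begin

abbreviation "N \<equiv> nbhd V E"
abbreviation "NR \<equiv> pendant_nonroots V E"
abbreviation "pt \<equiv> pendant_triangle V E"
abbreviation "pd \<equiv> pendant_diamond V E"
abbreviation "pk \<equiv> pendant_K4 V E"

lemma finV: "finite V" using G by (simp add: graph_def)

lemma edgeE: "e \<in> E \<Longrightarrow> \<exists>u v. u \<noteq> v \<and> e = {u,v} \<and> u \<in> V \<and> v \<in> V"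
  using G by (simp add: graph_def)

lemma E_sub: "e \<in> E \<Longrightarrow> e \<subseteq> V" using edgeE by blast

lemma finE: "finite E"
proof -
  have "E \<subseteq> Pow V" using E_sub by blast
  then show ?thesis using finV by (meson finite_Pow_iff finite_subset)
qed

lemma twoE: "twosets E" unfolding twosets_def using edgeE by blast

lemma edge_neq: "{u,v} \<in> E \<Longrightarrow> u \<noteq> v"
  using edgeE by (metis doubleton_eq_iff insert_absorb2)

lemma edge_V: "{u,v} \<in> E \<Longrightarrow> u \<in> V \<and> v \<in> V"
  using E_sub by blast

lemma edge_sym: "{u,v} \<in> E \<longleftrightarrow> {v,u} \<in> E" by (simp add: insert_commute)

lemma N_iff: "v \<in> N u \<longleftrightarrow> {u,v} \<in> E"
  unfolding nbhd_def using edge_V by blast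

lemma finN: "finite (N u)" unfolding nbhd_def using finV by simp

lemma degN: "deg V E u = card (N u)" by (simp add: deg_def)

lemma pt_N: assumes "pt a b c" shows "N a = {b,c}" "N b = {a,c}"
proof -
  from assms have h: "{a,b} \<in> E" "{a,c} \<in> E" "{b,c} \<in> E" "a\<noteq>b" "a\<noteq>c" "b\<noteq>c"
    "card (N a) = 2" "card (N b) = 2" by (auto simp: pendant_triangle_def degN)
  show "N a = {b,c}" using card2_eq[OF finN, of b a c] h by (simp add: insert_commute N_iff)
  show "N b = {a,c}" using card2_eq[OF finN, of a b c] h by (simp add: insert_commute N_iff)
qed

lemma pt_deg: assumes "pt a b c" shows "card (N c) > 2" "a \<noteq> b" "a \<noteq> c" "b \<noteq> c"
  "{a,b} \<in> E" "{a,c} \<in> E" "{b,c} \<in> E"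
  using assms by (auto simp: pendant_triangle_def degN)

lemma pd_N: assumes "pd a b c d" shows "N a = {b,c}" "N b = {a,c,d}" "N c = {a,b,d}"
proof -
  from assms have h: "{a,b} \<in> E" "{a,c} \<in> E" "{b,c} \<in> E" "{b,d} \<in> E" "{c,d} \<in> E" "distinct [a,b,c,d]"
    "card (N a) = 2" "card (N b) = 3" "card (N c) = 3" by (auto simp: pendant_diamond_def degN)
  show "N a = {b,c}" using card2_eq[OF finN, of b a c] h by (simp add: insert_commute N_iff)
  show "N b = {a,c,d}" using card3_eq[OF finN, of a b c d] h by (simp add: insert_commute N_iff)
  show "N c = {a,b,d}" using card3_eq[OF finN, of a c b d] h by (simp add: insert_commute N_iff)
qed

lemma pd_deg: assumes "pd a b c d" shows "card (N d) \<ge> 3" "distinct [a,b,c,d]"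
  "{a,b} \<in> E" "{a,c} \<in> E" "{b,c} \<in> E" "{b,d} \<in> E" "{c,d} \<in> E" "{a,d} \<notin> E"
  using assms by (auto simp: pendant_diamond_def degN)

lemma pk_N: assumes "pk a b c d" shows "N a = {b,c,d}" "N b = {a,c,d}" "N c = {a,b,d}"
proof -
  from assms have h: "{a,b} \<in> E" "{a,c} \<in> E" "{a,d} \<in> E" "{b,c} \<in> E" "{b,d} \<in> E" "{c,d} \<in> E" "distinct [a,b,c,d]"
    "card (N a) = 3" "card (N b) = 3" "card (N c) = 3" by (auto simp: pendant_K4_def degN)
  show "N a = {b,c,d}" using card3_eq[OF finN, of b a c d] h by (simp add: insert_commute N_iff)
  show "N b = {a,c,d}" using card3_eq[OF finN, of a b c d] h by (simp add: insert_commute N_iff)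
  show "N c = {a,b,d}" using card3_eq[OF finN, of a c b d] h by (simp add: insert_commute N_iff)
qed

lemma pk_deg: assumes "pk a b c d" shows "card (N d) > 3" "distinct [a,b,c,d]"
  "{a,b} \<in> E" "{a,c} \<in> E" "{b,c} \<in> E" "{b,d} \<in> E" "{c,d} \<in> E" "{a,d} \<in> E"
  using assms by (auto simp: pendant_K4_def degN)

lemma NR_iff: "z \<in> NR \<longleftrightarrow> (\<exists>a b c. pt a b c \<and> z \<in> {a,b}) \<or> (\<exists>a b c d. pd a b c d \<and> z \<in> {a,b,c})
   \<or> (\<exists>a b c d. pk a b c d \<and> z \<in> {a,b,c})"
  unfolding pendant_nonroots_def by blast

end

context sg begin

lemma pt_root: assumes "pt a b c" shows "c \<notin> NR"
proof
  assume "c \<in> NR"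
  have dg: "deg V E a = 2" "deg V E b = 2" "deg V E c > 2" "a \<noteq> b" using assms by (auto simp: pendant_triangle_def)
  have ab: "a \<in> N c" "b \<in> N c" using assms by (auto simp: pendant_triangle_def edge_sym N_iff)
  from \<open>c \<in> NR\<close> consider (t) a' b' c' where "pt a' b' c'" "c \<in> {a',b'}"
    | (d) a' b' c' d' where "pd a' b' c' d'" "c \<in> {a',b',c'}"
    | (k) a' b' c' d' where "pk a' b' c' d'" "c \<in> {a',b',c'}" unfolding NR_iff by blast
  then show False
  proof cases
    case t then show ?thesis using dg by (auto simp: pendant_triangle_def)
  next
    case d
    note N = pd_N[OF d(1)]
    have dd: "deg V E a' = 2" "deg V E b' = 3" "deg V E c' = 3" "deg V E d' \<ge> 3"
      using d(1) by (auto simp: pendant_diamond_def)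
    show ?thesis using d(2) N ab dg dd by auto
  next
    case k
    note N = pk_N[OF k(1)]
    have dd: "deg V E a' = 3" "deg V E b' = 3" "deg V E c' = 3" "deg V E d' > 3"
      using k(1) by (auto simp: pendant_K4_def)
    show ?thesis using k(2) N ab dg dd by auto
  qed
qed

lemma pd_root: assumes "pd a b c d" shows "d \<notin> NR"
proof
  assume "d \<in> NR"
  have dg: "deg V E a = 2" "deg V E b = 3" "deg V E c = 3" "deg V E d \<ge> 3" "distinct [a,b,c,d]" "{a,d} \<notin> E"
    using assms by (auto simp: pendant_diamond_def)
  have bc: "b \<in> N d" "c \<in> N d" using assms by (auto simp: pendant_diamond_def edge_sym N_iff)
  note NN = pd_N[OF assms]
  from \<open>d \<in> NR\<close> consider (t) a' b' c' where "pt a' b' c'" "d \<in> {a',b'}"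
    | (d) a' b' c' d' where "pd a' b' c' d'" "d \<in> {a',b',c'}"
    | (k) a' b' c' d' where "pk a' b' c' d'" "d \<in> {a',b',c'}" unfolding NR_iff by blast
  then show False
  proof cases
    case t then show ?thesis using dg by (auto simp: pendant_triangle_def)
  next
    case d
    note N = pd_N[OF d(1)]
    have dd: "deg V E a' = 2" "deg V E b' = 3" "deg V E c' = 3" "deg V E d' \<ge> 3" "distinct [a',b',c',d']"
      using d(1) by (auto simp: pendant_diamond_def)
    have "d = b' \<or> d = c'" using d(2) dd dg by auto
    then show ?thesis
    proof
      assume e: "d = b'"
      then have "b \<in> {a',c',d'}" "c \<in> {a',c',d'}" using N bc by auto
      then have "b \<in> {c',d'}" "c \<in> {c',d'}" using dd dg by auto
      then have "c' \<in> {b,c}" using dg by auto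
      then have "a' \<in> N b \<union> N c" using N by auto
      then have "a' = a" using NN dd dg e by auto
      moreover have "a' \<in> N d" using N e by auto
      ultimately show False using dg(6) by (simp add: N_iff edge_sym)
    next
      assume e: "d = c'"
      then have "b \<in> {a',b',d'}" "c \<in> {a',b',d'}" using N bc by auto
      then have "b \<in> {b',d'}" "c \<in> {b',d'}" using dd dg by auto
      then have "b' \<in> {b,c}" using dg by auto
      then have "a' \<in> N b \<union> N c" using N by (auto simp: edge_sym)
      then have "a' = a" using NN dd dg e by auto
      moreover have "a' \<in> N d" using N e by auto
      ultimately show False using dg(6) by (simp add: N_iff edge_sym)
    qed
  next
    case k
    note N = pk_N[OF k(1)]
    have dd: "deg V E a' = 3" "deg V E b' = 3" "deg V E c' = 3" "deg V E d' > 3" "distinct [a',b',c',d']"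
      using k(1) by (auto simp: pendant_K4_def)
    have E6: "{a',b'} \<in> E" "{a',c'} \<in> E" "{b',c'} \<in> E" "{a',d'} \<in> E" "{b',d'} \<in> E" "{c',d'} \<in> E"
      using k(1) by (auto simp: pendant_K4_def)
    have sub: "N d \<subseteq> {a',b',c',d'}" using k(2) N by auto
    have all: "\<And>p q. p\<in>{a',b',c',d'} \<Longrightarrow> q\<in>{a',b',c',d'} \<Longrightarrow> p \<noteq> q \<Longrightarrow> {p, q} \<in> E"
      using E6 edge_sym by auto
    have "N d \<subseteq> {b,c}"
    proof
      fix y assume y: "y \<in> N d"
      show "y \<in> {b,c}"
      proof (rule ccontr)
        assume ny: "y \<notin> {b,c}"
        have "y \<in> {a',b',c',d'}" "b \<in> {a',b',c',d'}" using sub y bc by auto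
        then have "{b,y} \<in> E" using all ny by (metis insertCI)
        then have "y \<in> N b" by (simp add: N_iff)
        moreover have "y \<noteq> d" using y edge_neq by (auto simp: N_iff)
        ultimately have "y = a" using NN ny by auto
        then show False using y dg(6) by (simp add: N_iff insert_commute)
      qed
    qed
    then have "card (N d) \<le> 2" by (rule card_le2)
    then show False using dg(4) by (simp add: degN)
  qed
qed

lemma pk_root: assumes "pk a b c d" shows "d \<notin> NR"
proof
  assume "d \<in> NR"
  have "deg V E d > 3" using assms by (auto simp: pendant_K4_def)
  with \<open>d \<in> NR\<close> show False unfolding NR_iff
    by (auto simp: pendant_triangle_def pendant_diamond_def pendant_K4_def)
qed

end

context sg begin

definition att :: "'a \<Rightarrow> 'a \<Rightarrow> bool" where
  "att x y \<longleftrightarrow> (\<exists>a b. pt a b y \<and> x \<in> {a,b}) \<or> (\<exists>a b c. pd a b c y \<and> x \<in> {a,b,c}) \<or>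
     (\<exists>a b c. pk a b c y \<and> x \<in> {a,b,c})"

lemma att_NR: "att x y \<Longrightarrow> x \<in> NR" unfolding att_def NR_iff by blast
lemma NR_att: "x \<in> NR \<Longrightarrow> \<exists>y. att x y" unfolding att_def NR_iff by blast

lemma att_root: "att x y \<Longrightarrow> y \<notin> NR \<and> y \<in> V"
  unfolding att_def using pt_root pd_root pk_root
  by (auto simp: pendant_triangle_def pendant_diamond_def pendant_K4_def)

lemma att_step: assumes "att x y" "{x,z} \<in> E" shows "z = y \<or> att z y"
proof -
  have z: "z \<in> N x" using assms(2) by (simp add: N_iff)
  from assms(1) consider (t) a b where "pt a b y" "x \<in> {a,b}"
    | (d) a b c where "pd a b c y" "x \<in> {a,b,c}"
    | (k) a b c where "pk a b c y" "x \<in> {a,b,c}" unfolding att_def by blast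
  then show ?thesis
  proof cases
    case t
    then have "z \<in> {a,b,y}" using pt_N[OF t(1)] z by auto
    then show ?thesis using t(1) unfolding att_def by blast
  next
    case d
    then have "z \<in> {a,b,c,y}" using pd_N[OF d(1)] z by auto
    then show ?thesis using d(1) unfolding att_def by blast
  next
    case k
    then have "z \<in> {a,b,c,y}" using pk_N[OF k(1)] z by auto
    then show ?thesis using k(1) unfolding att_def by blast
  qed
qed

lemma nr_nbr: assumes "x \<in> NR" "{x,z} \<in> E" "z \<notin> NR" shows "att x z"
proof -
  obtain y where y: "att x y" using NR_att assms(1) by blast
  then have "z = y \<or> att z y" using att_step assms(2) by blast
  then show ?thesis using y assms(3) att_NR by blast
qed

lemma F_reach:
  assumes "u \<in> V" "u \<notin> NR" "(u,x) \<in> {(x,y). {x,y} \<in> E}\<^sup>*"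
  shows "\<exists>y. (u,y) \<in> {(x,y). {x,y} \<in> pr_E V E}\<^sup>* \<and> y \<notin> NR \<and> (x = y \<or> att x y)"
  using assms(3)
proof (induction rule: rtrancl_induct)
  case base then show ?case using assms by blast
next
  case (step x x')
  then obtain y where y: "(u,y) \<in> {(x,y). {x,y} \<in> pr_E V E}\<^sup>*" "y \<notin> NR" "x = y \<or> att x y" by blast
  have e: "{x,x'} \<in> E" using step(2) by simp
  show ?case
  proof (cases "x = y")
    case True
    show ?thesis
    proof (cases "x' \<in> NR")
      case True
      then have "att x' x" using nr_nbr[of x' x] e y(2) \<open>x = y\<close> by (simp add: insert_commute)
      then show ?thesis using y \<open>x = y\<close> by blast
    next
      case False
      have "{x,x'} \<in> pr_E V E" using e False y(2) \<open>x = y\<close>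
        by (auto simp: pr_E_def del_E_def)
      then have "(u,x') \<in> {(x,y). {x,y} \<in> pr_E V E}\<^sup>*" using y(1) \<open>x = y\<close>
        by (simp add: rtrancl.rtrancl_into_rtrancl)
      then show ?thesis using False by blast
    qed
  next
    case False
    then have "att x y" using y by blast
    then have "x' = y \<or> att x' y" using att_step e by blast
    then show ?thesis using y by blast
  qed
qed

lemma F_connected:
  assumes "connected_graph V E"
  shows "connected_graph (pr_V V E) (pr_E V E)"
proof -
  obtain v where v: "v \<in> V" using assms unfolding connected_graph_def by blast
  have ne: "pr_V V E \<noteq> {}"
  proof (cases "v \<in> NR")
    case True
    then obtain y where "att v y" using NR_att by blast
    then show ?thesis using att_root by (auto simp: pr_V_def del_V_def)
  next
    case False then show ?thesis using v by (auto simp: pr_V_def del_V_def)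
  qed
  have "(u, w) \<in> {(x, y). {x, y} \<in> pr_E V E}\<^sup>*" if "u \<in> pr_V V E" "w \<in> pr_V V E" for u w
  proof -
    have uw: "u \<in> V" "u \<notin> NR" "w \<in> V" "w \<notin> NR" using that by (auto simp: pr_V_def del_V_def)
    have "(u,w) \<in> {(x,y). {x,y} \<in> E}\<^sup>*" using assms uw unfolding connected_graph_def by blast
    from F_reach[OF uw(1,2) this] obtain y where
      "(u,y) \<in> {(x,y). {x,y} \<in> pr_E V E}\<^sup>*" "w = y \<or> att w y" by blast
    then show ?thesis using uw(4) att_NR by blast
  qed
  then show ?thesis using ne unfolding connected_graph_def by blast
qed

end

context sg begin

definition estar :: "'a \<Rightarrow> 'a set set" where "estar v = {e \<in> E. v \<in> e}"
definition tri :: "'a \<Rightarrow> 'a \<Rightarrow> 'a \<Rightarrow> 'a set set" where "tri a b c = {{a,b},{a,c},{b,c}}"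

lemma le_iff: "{e,f} \<in> line_edges E \<longleftrightarrow> e \<in> E \<and> f \<in> E \<and> e \<noteq> f \<and> e \<inter> f \<noteq> {}"
proof
  assume "{e,f} \<in> line_edges E"
  then obtain e' f' where h: "{e,f} = {e',f'}" "e' \<in> E" "f' \<in> E" "e' \<noteq> f'" "e' \<inter> f' \<noteq> {}"
    unfolding line_edges_def by blast
  then have "(e = e' \<and> f = f') \<or> (e = f' \<and> f = e')" by (metis doubleton_eq_iff)
  then show "e \<in> E \<and> f \<in> E \<and> e \<noteq> f \<and> e \<inter> f \<noteq> {}" using h by auto
next
  assume "e \<in> E \<and> f \<in> E \<and> e \<noteq> f \<and> e \<inter> f \<noteq> {}"
  then show "{e,f} \<in> line_edges E" unfolding line_edges_def by blast
qed

lemma indep_iff: "independent E (line_edges E) S \<longleftrightarrow> matching E S"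
  unfolding independent_def matching_def le_iff by blast

lemma maxind_iff: "maximal_independent E (line_edges E) S \<longleftrightarrow> maximal_matching E S"
  unfolding maximal_independent_def maximal_matching_def indep_iff by blast

lemma sclique_iff: "strong_clique E (line_edges E) C \<longleftrightarrow>
   C \<subseteq> E \<and> (\<forall>e\<in>C. \<forall>f\<in>C. e \<noteq> f \<longrightarrow> e \<inter> f \<noteq> {}) \<and> (\<forall>M. maximal_matching E M \<longrightarrow> C \<inter> M \<noteq> {})"
  unfolding strong_clique_def clique_def maxind_iff le_iff by blast

lemma two_cases: "e \<in> E \<Longrightarrow> \<exists>a b. a \<noteq> b \<and> e = {a,b}" using edgeE by blast

lemma other_end: assumes "e \<in> E" "x \<in> e" shows "\<exists>y. y \<noteq> x \<and> e = {x,y}"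
proof -
  obtain p q where pq: "p \<noteq> q" "e = {p,q}" using two_cases assms(1) by blast
  show ?thesis
  proof (cases "x = p")
    case True then show ?thesis using pq by auto
  next
    case False then have "x = q" using pq assms(2) by blast
    then show ?thesis using pq by (metis insert_commute)
  qed
qed

lemma clique_cases:
  assumes "C \<subseteq> E" "C \<noteq> {}" "\<forall>e\<in>C. \<forall>f\<in>C. e \<noteq> f \<longrightarrow> e \<inter> f \<noteq> {}"
  shows "(\<exists>v. C \<subseteq> estar v) \<or> (\<exists>a b c. a \<noteq> b \<and> a \<noteq> c \<and> b \<noteq> c \<and> C = tri a b c)"
proof (rule ccontr)
  assume nc: "\<not> ?thesis"
  obtain e where e: "e \<in> C" using assms(2) by blast
  obtain a b where ab: "a \<noteq> b" "e = {a,b}" using two_cases e assms(1) by blast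
  have "\<not> C \<subseteq> estar a" using nc by blast
  then obtain f where f0: "f \<in> C" "f \<notin> estar a" by (meson subsetI)
  then have f: "f \<in> C" "a \<notin> f" using assms(1) unfolding estar_def by auto
  have "e \<noteq> f" using f ab by auto
  then have "e \<inter> f \<noteq> {}" using assms(3) e f(1) by simp
  then have "b \<in> f" using ab f by auto
  then obtain c where c: "f = {b,c}" "c \<noteq> b" using other_end f assms(1) by blast
  have ca: "c \<noteq> a" using f c by auto
  have "\<not> C \<subseteq> estar b" using nc by blast
  then obtain g where g0: "g \<in> C" "g \<notin> estar b" by (meson subsetI)
  then have g: "g \<in> C" "b \<notin> g" using assms(1) unfolding estar_def by auto
  have "e \<noteq> g" "f \<noteq> g" using g ab c by auto
  then have "e \<inter> g \<noteq> {}" "f \<inter> g \<noteq> {}" using assms(3) e f(1) g(1) by simp_all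
  then have "a \<in> g" "c \<in> g" using ab c g by auto
  then have gg: "g = {a,c}"
  proof -
    obtain y where y: "y \<noteq> a" "g = {a,y}" using other_end g assms(1) \<open>a \<in> g\<close> by blast
    then show ?thesis using \<open>c \<in> g\<close> ca by auto
  qed
  have "C \<subseteq> tri a b c"
  proof
    fix h assume h: "h \<in> C"
    obtain p q where pq: "p \<noteq> q" "h = {p,q}" using two_cases h assms(1) by blast
    have meet: "x \<inter> y \<noteq> {}" if "x \<in> C" "y \<in> C" for x y
    proof (cases "x = y")
      case True
      then show ?thesis using two_cases[of x] that assms(1) by auto
    next
      case False then show ?thesis using assms(3) that by blast
    qed
    have i1: "h \<inter> {a,b} \<noteq> {}" using meet[OF h e] ab by simp
    have i2: "h \<inter> {b,c} \<noteq> {}" using meet[OF h f(1)] c by simp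
    have i3: "h \<inter> {a,c} \<noteq> {}" using meet[OF h g(1)] gg by simp
    show "h \<in> tri a b c" using tri_meet[OF pq(1) ab(1) ca[symmetric] c(2)[symmetric]] i1 i2 i3 pq unfolding tri_def by simp
  qed
  moreover have "tri a b c \<subseteq> C" using e f(1) g(1) ab(2) c(1) gg unfolding tri_def by simp
  ultimately have "C = tri a b c" by (rule antisym)
  then have "\<exists>a b c. a \<noteq> b \<and> a \<noteq> c \<and> b \<noteq> c \<and> C = tri a b c" using ab(1) ca c(2) by metis
  then show False using nc by blast
qed

lemma star_strong:
  assumes "C \<subseteq> estar v" "C \<noteq> {}" "\<forall>M. maximal_matching E M \<longrightarrow> C \<inter> M \<noteq> {}"
  shows "C = estar v" "strong_vertex V E v"
proof -
  show "C = estar v"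
  proof
    show "estar v \<subseteq> C"
    proof
      fix e assume e: "e \<in> estar v"
      show "e \<in> C"
      proof (rule ccontr)
        assume ne: "e \<notin> C"
        have "matching E {e}" using e unfolding matching_def estar_def by auto
        then obtain M where M: "maximal_matching E M" "{e} \<subseteq> M" using matching_extend finE by blast
        then obtain f where f: "f \<in> C" "f \<in> M" using assms(3) by blast
        have "f \<noteq> e" using f ne by auto
        moreover have "v \<in> f" "v \<in> e" using f assms(1) e unfolding estar_def by auto
        ultimately show False using M f unfolding maximal_matching_def matching_def by blast
      qed
    qed
  qed (rule assms(1))
  obtain e where e: "e \<in> C" using assms(2) by blast
  then have "v \<in> V" using assms(1) E_sub unfolding estar_def by blast
  moreover have "\<forall>M. maximal_matching E M \<longrightarrow> v \<in> \<Union>M"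
    using assms(1,3) unfolding estar_def by blast
  ultimately show "strong_vertex V E v" unfolding strong_vertex_def by blast
qed

lemma estar_sclique: assumes "strong_vertex V E v" shows "strong_clique E (line_edges E) (estar v)"
  unfolding sclique_iff
proof (intro conjI ballI allI impI)
  show "estar v \<subseteq> E" unfolding estar_def by auto
  fix e f assume "e \<in> estar v" "f \<in> estar v" "e \<noteq> f"
  then show "e \<inter> f \<noteq> {}" unfolding estar_def by auto
next
  fix M assume "maximal_matching E M"
  then have "v \<in> \<Union>M" using assms unfolding strong_vertex_def by blast
  then obtain e where "e \<in> M" "v \<in> e" by blast
  moreover have "e \<in> E" using \<open>maximal_matching E M\<close> \<open>e \<in> M\<close>
    unfolding maximal_matching_def matching_def by blast
  ultimately show "estar v \<inter> M \<noteq> {}" unfolding estar_def by blast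
qed

lemma strongV_iff: "strong_vertex V E u \<longleftrightarrow> u \<in> V \<and>
   \<not>(\<exists>M. matching E M \<and> u \<notin> \<Union>M \<and> (\<forall>v. {u,v} \<in> E \<longrightarrow> v \<in> \<Union>M))"
  unfolding strong_vertex_def using strong_iff[OF finE twoE] by blast

lemma tri_not_strong:
  assumes "{a,b} \<in> E" "{a,x} \<in> E" "{b,y} \<in> E" "x \<notin> {a,b,c}" "y \<notin> {a,b,c}" "x \<noteq> y"
  shows "\<exists>M. maximal_matching E M \<and> tri a b c \<inter> M = {}"
proof -
  have ab: "a \<noteq> b" using assms(1) edge_neq by blast
  have "matching E {{a,x},{b,y}}" using assms ab unfolding matching_def by auto
  then obtain M where M: "maximal_matching E M" "{{a,x},{b,y}} \<subseteq> M" using matching_extend finE by blast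
  have "tri a b c \<inter> M = {}"
  proof (rule ccontr)
    assume "tri a b c \<inter> M \<noteq> {}"
    then obtain t where t: "t \<in> tri a b c" "t \<in> M" by blast
    have ts: "t \<subseteq> {a,b,c}" using t(1) unfolding tri_def by auto
    have n1: "t \<noteq> {a,x}" using ts assms(4) by auto
    have n2: "t \<noteq> {b,y}" using ts assms(5) by auto
    have mm: "\<And>e f. e\<in>M \<Longrightarrow> f\<in>M \<Longrightarrow> e \<noteq> f \<Longrightarrow> e \<inter> f = {}" using M(1) unfolding maximal_matching_def matching_def by blast
    have ax: "{a,x} \<in> M" "{b,y} \<in> M" using M(2) by auto
    have "a \<in> t \<or> b \<in> t" using t(1) unfolding tri_def by auto
    then show False
    proof
      assume "a \<in> t" then have "t \<inter> {a,x} \<noteq> {}" by auto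
      then show False using mm[OF t(2) ax(1) n1] by simp
    next
      assume "b \<in> t" then have "t \<inter> {b,y} \<noteq> {}" by auto
      then show False using mm[OF t(2) ax(2) n2] by simp
    qed
  qed
  then show ?thesis using M by blast
qed

end

context sg begin

lemma mm_sub: "maximal_matching E M \<Longrightarrow> M \<subseteq> E"
  unfolding maximal_matching_def matching_def by blast

lemma mm_disj: "maximal_matching E M \<Longrightarrow> e \<in> M \<Longrightarrow> f \<in> M \<Longrightarrow> e \<noteq> f \<Longrightarrow> e \<inter> f = {}"
  unfolding maximal_matching_def matching_def by blast

lemma cov_edge: assumes "M \<subseteq> E" "x \<in> \<Union>M" shows "\<exists>y. {x,y} \<in> M \<and> y \<in> N x"
proof -
  obtain e where e: "e \<in> M" "x \<in> e" using assms(2) by blast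
  then obtain y where "e = {x,y}" using other_end assms(1) by blast
  then show ?thesis using e assms(1) by (auto simp: N_iff)
qed

lemma mm_cov: "maximal_matching E M \<Longrightarrow> x \<notin> \<Union>M \<Longrightarrow> {x,y} \<in> E \<Longrightarrow> y \<in> \<Union>M"
  using not_strongD[OF twoE] by blast

lemma two_match: "maximal_matching E M \<Longrightarrow> {x,y} \<in> M \<Longrightarrow> {x,z} \<in> M \<Longrightarrow> y = z"
proof (rule ccontr)
  assume a: "maximal_matching E M" "{x,y} \<in> M" "{x,z} \<in> M" "y \<noteq> z"
  then have "{x,y} \<noteq> {x,z}" by (auto simp: doubleton_eq_iff)
  then show False using mm_disj[OF a(1-3)] by auto
qed

lemma pt_tri_strong: assumes "pt a b c" "maximal_matching E M" shows "tri a b c \<inter> M \<noteq> {}"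
proof
  assume h: "tri a b c \<inter> M = {}"
  note NN = pt_N[OF assms(1)]
  have sub: "M \<subseteq> E" using mm_sub assms(2) .
  have "a \<notin> \<Union>M"
  proof
    assume "a \<in> \<Union>M"
    then obtain y where "{a,y} \<in> M" "y \<in> N a" using cov_edge sub by blast
    then show False using h NN unfolding tri_def by auto
  qed
  then have "b \<in> \<Union>M" using mm_cov assms pt_deg(5) by blast
  then obtain y where "{b,y} \<in> M" "y \<in> N b" using cov_edge sub by blast
  then show False using h NN unfolding tri_def by (auto simp: insert_commute)
qed

lemma pd_tri_strong: assumes "pd a b c d" "maximal_matching E M" shows "tri a b c \<inter> M \<noteq> {}"
proof
  assume h: "tri a b c \<inter> M = {}"
  note NN = pd_N[OF assms(1)]
  have dd: "distinct [a,b,c,d]" using pd_deg assms(1) by blast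
  have sub: "M \<subseteq> E" using mm_sub assms(2) .
  have "a \<notin> \<Union>M"
  proof
    assume "a \<in> \<Union>M"
    then obtain y where "{a,y} \<in> M" "y \<in> N a" using cov_edge sub by blast
    then show False using h NN unfolding tri_def by auto
  qed
  then have "b \<in> \<Union>M" "c \<in> \<Union>M" using mm_cov assms pd_deg(3,4) by blast+
  then obtain y z where y: "{b,y} \<in> M" "y \<in> N b" and z: "{c,z} \<in> M" "z \<in> N c" using cov_edge sub by meson
  have "y = d" using y h NN unfolding tri_def by (auto simp: insert_commute)
  moreover have "z = d" using z h NN unfolding tri_def by (auto simp: insert_commute)
  ultimately have "{d,b} \<in> M" "{d,c} \<in> M" using y z by (auto simp: insert_commute)
  then show False using two_match[OF assms(2)] dd by fastforce
qed

lemma pk_tri_strong: assumes "pk a b c d" "maximal_matching E M" shows "tri a b c \<inter> M \<noteq> {}"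
proof
  assume h: "tri a b c \<inter> M = {}"
  note NN = pk_N[OF assms(1)]
  have dd: "distinct [a,b,c,d]" using pk_deg assms(1) by blast
  have E3: "{a,b} \<in> E" "{a,c} \<in> E" "{b,c} \<in> E" using pk_deg assms(1) by auto
  have sub: "M \<subseteq> E" using mm_sub assms(2) .
  have cd: "{x,d} \<in> M" if xx: "x \<in> {a,b,c}" "x \<in> \<Union>M" for x
  proof -
    obtain y where y: "{x,y} \<in> M" "y \<in> N x" using cov_edge sub xx(2) by blast
    then have "y = d" using h NN xx(1) unfolding tri_def by (auto simp: insert_commute)
    then show ?thesis using y by simp
  qed
  have one: "x = y" if xx: "x \<in> {a,b,c}" "y \<in> {a,b,c}" "x \<in> \<Union>M" "y \<in> \<Union>M" for x y
  proof -
    have "{d,x} \<in> M" "{d,y} \<in> M" using cd[OF xx(1) xx(3)] cd[OF xx(2) xx(4)] by (simp_all add: insert_commute)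
    then show ?thesis using two_match[OF assms(2)] by blast
  qed
  show False
  proof (cases "a \<in> \<Union>M")
    case True
    have "b \<notin> \<Union>M"
    proof
      assume "b \<in> \<Union>M" then have "a = b" using one[of a b] True by simp
      then show False using dd by simp
    qed
    then have "c \<in> \<Union>M" using mm_cov assms(2) E3(3) by blast
    then have "a = c" using one[of a c] True by simp
    then show False using dd by simp
  next
    case False
    then have "b \<in> \<Union>M" "c \<in> \<Union>M" using mm_cov assms(2) E3 by blast+
    then have "b = c" using one[of b c] by simp
    then show False using dd by simp
  qed
qed

lemma pk_root_strong: assumes "pk a b c d" shows "strong_vertex V E d"
  unfolding strongV_iff
proof
  show "d \<in> V" using assms by (simp add: pendant_K4_def)
  note NN = pk_N[OF assms(1)]
  have dd: "distinct [a,b,c,d]" using pk_deg assms(1) by blast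
  show "\<not>(\<exists>M. matching E M \<and> d \<notin> \<Union>M \<and> (\<forall>v. {d,v} \<in> E \<longrightarrow> v \<in> \<Union>M))"
  proof
    assume "\<exists>M. matching E M \<and> d \<notin> \<Union>M \<and> (\<forall>v. {d,v} \<in> E \<longrightarrow> v \<in> \<Union>M)"
    then obtain M where M: "matching E M" "d \<notin> \<Union>M" "\<forall>v. {d,v} \<in> E \<longrightarrow> v \<in> \<Union>M" by blast
    have sub: "M \<subseteq> E" using M(1) unfolding matching_def by blast
    have md: "\<And>e f. e \<in> M \<Longrightarrow> f \<in> M \<Longrightarrow> e \<noteq> f \<Longrightarrow> e \<inter> f = {}" using M(1) unfolding matching_def by blast
    have cov: "\<exists>y. {x,y} \<in> M \<and> y \<in> {a,b,c} - {x}" if xx: "x \<in> {a,b,c}" for x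
    proof -
      have "{d,x} \<in> E" using xx pk_deg[OF assms] by (auto simp: insert_commute)
      then have "x \<in> \<Union>M" using M(3) by blast
      then obtain y where y: "{x,y} \<in> M" "y \<in> N x" using cov_edge sub by blast
      have "y \<noteq> d" using y M(2) by auto
      moreover have "y \<noteq> x" using y edge_neq sub by blast
      ultimately show ?thesis using y NN xx by auto
    qed
    obtain y where y: "{a,y} \<in> M" "y \<in> {b,c}" using cov[of a] dd by auto
    obtain z where z: "{y,z} \<in> M" "z \<in> {a,b,c} - {y}" using cov[of y] y by auto
    let ?w = "if y = b then c else b"
    have w: "?w \<in> {a,b,c}" "?w \<noteq> a" "?w \<noteq> y" using y dd by auto
    obtain t where t: "{?w,t} \<in> M" "t \<in> {a,b,c} - {?w}" using cov[of ?w] w(1) by blast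
    have "t = a \<or> t = y" using t y dd by auto
    then show False
    proof
      assume "t = a"
      then have "{?w,a} \<inter> {a,y} \<noteq> {}" by auto
      moreover have "{?w,a} \<noteq> {a,y}" using w by (auto simp: doubleton_eq_iff)
      ultimately show False using md t(1) y(1) \<open>t = a\<close> by blast
    next
      assume "t = y"
      then have "{?w,y} \<inter> {a,y} \<noteq> {}" by auto
      moreover have "{?w,y} \<noteq> {a,y}" using w by (auto simp: doubleton_eq_iff)
      ultimately show False using md t(1) y(1) \<open>t = y\<close> by blast
    qed
  qed
qed

end

context sg begin

abbreviation "FV \<equiv> pr_V V E"
abbreviation "FE \<equiv> pr_E V E"
abbreviation "NF \<equiv> nbhd FV FE"

lemma FE_iff: "e \<in> FE \<longleftrightarrow> e \<in> E \<and> e \<inter> NR = {}" by (simp add: pr_E_def del_E_def)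
lemma FV_iff: "v \<in> FV \<longleftrightarrow> v \<in> V \<and> v \<notin> NR" by (simp add: pr_V_def del_V_def)
lemma NF_iff: "v \<in> NF u \<longleftrightarrow> {u,v} \<in> FE"
  unfolding nbhd_def FE_iff FV_iff using edge_V by blast
lemma Rtri_iff: "c \<in> R_tri V E \<longleftrightarrow> (\<exists>a b. pt a b c)" by (simp add: R_tri_def)
lemma Rdia_iff: "c \<in> R_dia V E \<longleftrightarrow> (\<exists>a b b'. pd a b b' c)" by (simp add: R_dia_def)
lemma RK4_iff: "c \<in> R_K4 V E \<longleftrightarrow> (\<exists>a b b'. pk a b b' c)" by (simp add: R_K4_def)

lemma sub_strong:
  assumes "E' \<subseteq> E"
  shows "strong_vertex V' E' u \<longleftrightarrow> u \<in> V' \<and> \<not>(\<exists>M. matching E' M \<and> u \<notin> \<Union>M \<and> (\<forall>v. {u,v} \<in> E' \<longrightarrow> v \<in> \<Union>M))"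
proof -
  have "finite E'" using assms finE finite_subset by blast
  moreover have "twosets E'" using assms twoE unfolding twosets_def by blast
  ultimately have "(\<forall>M. maximal_matching E' M \<longrightarrow> u \<in> \<Union>M) \<longleftrightarrow>
     \<not>(\<exists>M. matching E' M \<and> u \<notin> \<Union>M \<and> (\<forall>v. {u,v} \<in> E' \<longrightarrow> v \<in> \<Union>M))" by (rule strong_iff)
  then show ?thesis unfolding strong_vertex_def by simp
qed

lemma notstrong_by: assumes "matching E M" "u \<notin> \<Union>M" "N u \<subseteq> \<Union>M" shows "\<not> strong_vertex V E u"
proof -
  have "\<forall>v. {u,v} \<in> E \<longrightarrow> v \<in> \<Union>M" using assms(3) by (auto simp: N_iff)
  then show ?thesis unfolding strongV_iff using assms(1,2) by blast
qed

lemma extra_nbr3: assumes "card (N d) \<ge> 3" "{a,d} \<notin> E" shows "\<exists>x. {d,x} \<in> E \<and> x \<notin> {a,b,c,d}"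
proof (rule ccontr)
  assume "\<not> ?thesis"
  then have "N d \<subseteq> {b,c}" using assms(2) edge_neq by (auto simp: N_iff insert_commute)
  then have "card (N d) \<le> 2" by (rule card_le2)
  then show False using assms(1) by simp
qed

lemma extra_nbr4: assumes "card (N d) > 3" shows "\<exists>x. {d,x} \<in> E \<and> x \<notin> {a,b,c,d}"
proof (rule ccontr)
  assume "\<not> ?thesis"
  then have "N d \<subseteq> {a,b,c}" using edge_neq by (auto simp: N_iff insert_commute)
  then have "card (N d) \<le> 3" by (rule card_le3)
  then show False using assms(1) by simp
qed

lemma pt_ns: assumes "pt a b c" shows "\<not> strong_vertex V E a" "\<not> strong_vertex V E b"
proof -
  note NN = pt_N[OF assms]
  have m: "matching E {{b,c}}" "matching E {{a,c}}" using pt_deg[OF assms] unfolding matching_def by auto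
  show "\<not> strong_vertex V E a" by (rule notstrong_by[OF m(1)]) (use NN pt_deg[OF assms] in auto)
  show "\<not> strong_vertex V E b" by (rule notstrong_by[OF m(2)]) (use NN pt_deg[OF assms] in auto)
qed

lemma pd_ns: assumes "pd a b c d" shows "\<not> strong_vertex V E a" "\<not> strong_vertex V E b" "\<not> strong_vertex V E c"
proof -
  note NN = pd_N[OF assms]
  note dg = pd_deg[OF assms]
  obtain x where x: "{d,x} \<in> E" "x \<notin> {a,b,c,d}" using extra_nbr3[OF dg(1) dg(8)] by blast
  have m: "matching E {{b,c}}" "matching E {{a,c},{d,x}}" "matching E {{a,b},{d,x}}"
    using dg x unfolding matching_def by auto
  show "\<not> strong_vertex V E a" by (rule notstrong_by[OF m(1)]) (use NN dg in auto)
  show "\<not> strong_vertex V E b" by (rule notstrong_by[OF m(2)]) (use NN dg x in auto)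
  show "\<not> strong_vertex V E c" by (rule notstrong_by[OF m(3)]) (use NN dg x in auto)
qed

lemma pk_ns: assumes "pk a b c d" shows "\<not> strong_vertex V E a" "\<not> strong_vertex V E b" "\<not> strong_vertex V E c"
proof -
  note NN = pk_N[OF assms]
  note dg = pk_deg[OF assms]
  obtain x where x: "{d,x} \<in> E" "x \<notin> {a,b,c,d}" using extra_nbr4[OF dg(1)] by blast
  have m: "matching E {{b,c},{d,x}}" "matching E {{a,c},{d,x}}" "matching E {{a,b},{d,x}}"
    using dg x unfolding matching_def by auto
  show "\<not> strong_vertex V E a" by (rule notstrong_by[OF m(1)]) (use NN dg x in auto)
  show "\<not> strong_vertex V E b" by (rule notstrong_by[OF m(2)]) (use NN dg x in auto)
  show "\<not> strong_vertex V E c" by (rule notstrong_by[OF m(3)]) (use NN dg x in auto)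
qed

end

context sg begin

lemma att_R: "att z v \<Longrightarrow> v \<in> R_tri V E \<or> v \<in> R_dia V E \<or> v \<in> R_K4 V E"
  unfolding att_def Rtri_iff Rdia_iff RK4_iff by blast

lemma delE_iff: "e \<in> del_E FE X \<longleftrightarrow> e \<in> E \<and> e \<inter> NR = {} \<and> e \<inter> X = {}"
  by (auto simp: del_E_def FE_iff)

lemma tr_back:
  assumes u: "u \<in> FV"
   and h1: "\<forall>y\<in>NF u. y \<notin> R_dia V E \<and> y \<notin> R_K4 V E"
   and h2: "\<forall>y\<in>NF u. \<forall>z\<in>NF u. {y,z} \<notin> FE"
   and st: "strong_vertex (del_V FV (NF u \<inter> R_tri V E)) (del_E FE (NF u \<inter> R_tri V E)) u"
  shows "strong_vertex V E u"
proof (rule ccontr)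
  define X where "X = NF u \<inter> R_tri V E"
  assume ns: "\<not> strong_vertex V E u"
  have uV: "u \<in> V" using u FV_iff by blast
  obtain M where M: "matching E M" "u \<notin> \<Union>M" "\<forall>v. {u,v} \<in> E \<longrightarrow> v \<in> \<Union>M"
    using ns uV unfolding strongV_iff by blast
  have Msub: "M \<subseteq> E" using M(1) unfolding matching_def by blast
  define M' where "M' = {e\<in>M. e \<in> del_E FE X}"
  have sub: "del_E FE X \<subseteq> E" using delE_iff by blast
  have mdisj: "\<And>e f. e\<in>M \<Longrightarrow> f\<in>M \<Longrightarrow> e\<noteq>f \<Longrightarrow> e\<inter>f={}" using M(1) unfolding matching_def by blast
  have M'M: "M' \<subseteq> M" unfolding M'_def by blast
  have m': "matching (del_E FE X) M'" unfolding matching_def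
  proof (intro conjI ballI impI)
    show "M' \<subseteq> del_E FE X" unfolding M'_def by blast
    fix e f assume "e\<in>M'" "f\<in>M'" "e\<noteq>f"
    then show "e\<inter>f={}" using mdisj M'M by blast
  qed
  have "\<Union>M' \<subseteq> \<Union>M" using M'M by (rule Union_mono)
  then have u': "u \<notin> \<Union>M'" using M(2) by (meson subsetD)
  have cov: "\<forall>v. {u,v} \<in> del_E FE X \<longrightarrow> v \<in> \<Union>M'"
  proof (intro allI impI)
    fix v assume uv: "{u,v} \<in> del_E FE X"
    have uvE: "{u,v} \<in> E" and vNR: "v \<notin> NR" and uvX: "{u,v} \<inter> X = {}"
      using uv unfolding delE_iff by simp_all
    have vNF: "v \<in> NF u" using uvE vNR u unfolding NF_iff FE_iff FV_iff by blast
    have "v \<in> \<Union>M" using M(3) uvE by blast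
    then obtain z where z: "{v,z} \<in> M" "z \<in> N v" using cov_edge Msub by blast
    have zE: "{v,z} \<in> E" using z(1) Msub by blast
    have vX: "v \<notin> X" using uvX by blast
    have zNR: "z \<notin> NR"
    proof
      assume "z \<in> NR"
      then have "att z v" using nr_nbr zE vNR by (simp add: insert_commute)
      then have "v \<in> R_tri V E \<or> v \<in> R_dia V E \<or> v \<in> R_K4 V E" by (rule att_R)
      then show False using vX vNF h1 unfolding X_def by blast
    qed
    have zX: "z \<notin> X"
    proof
      assume "z \<in> X"
      then have "z \<in> NF u" unfolding X_def by blast
      moreover have "{v,z} \<in> FE" using zE vNR zNR unfolding FE_iff by blast
      ultimately show False using h2 vNF by blast
    qed
    have "{v,z} \<in> del_E FE X" using zE vNR zNR vX zX unfolding delE_iff by blast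
    then show "v \<in> \<Union>M'" using z(1) unfolding M'_def by blast
  qed
  have "\<not> strong_vertex (del_V FV X) (del_E FE X) u"
    unfolding sub_strong[OF sub] using m' u' cov by blast
  then show False using st unfolding X_def by blast
qed

end

context sg begin

lemma pt_NR: "pt a b c \<Longrightarrow> a \<in> NR \<and> b \<in> NR"
  unfolding pendant_nonroots_def by blast
lemma pd_NR: "pd a b c d \<Longrightarrow> a \<in> NR \<and> b \<in> NR \<and> c \<in> NR"
  unfolding pendant_nonroots_def by blast
lemma pk_NR: "pk a b c d \<Longrightarrow> a \<in> NR \<and> b \<in> NR \<and> c \<in> NR"
  unfolding pendant_nonroots_def by blast

lemma pd_bc: assumes "pd a b c u" "pd a' b' c' u" "{b,c} \<inter> {b',c'} \<noteq> {}"
  shows "{b,c} = {b',c'}"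
proof -
  note N1 = pd_N[OF assms(1)] and N2 = pd_N[OF assms(2)]
  have d1: "deg V E a = 2" "deg V E b = 3" "deg V E c = 3" "distinct [a,b,c,u]"
    using assms(1) by (auto simp: pendant_diamond_def)
  have d2: "deg V E a' = 2" "deg V E b' = 3" "deg V E c' = 3" "distinct [a',b',c',u]"
    using assms(2) by (auto simp: pendant_diamond_def)
  have "b = b' \<or> b = c' \<or> c = b' \<or> c = c'" using assms(3) by auto
  then show ?thesis
  proof (elim disjE)
    assume e: "b = b'"
    then have "c' \<in> {a,c,u}" using N1 N2 by auto
    then have "c' = c" using d1 d2 by auto
    then show ?thesis using e by simp
  next
    assume e: "b = c'"
    then have "b' \<in> {a,c,u}" using N1 N2 by auto
    then have "b' = c" using d1 d2 by auto
    then show ?thesis using e by (simp add: insert_commute)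
  next
    assume e: "c = b'"
    then have "c' \<in> {a,b,u}" using N1 N2 by auto
    then have "c' = b" using d1 d2 by auto
    then show ?thesis using e by (simp add: insert_commute)
  next
    assume e: "c = c'"
    then have "b' \<in> {a,b,u}" using N1 N2 by auto
    then have "b' = b" using d1 d2 by auto
    then show ?thesis using e by simp
  qed
qed

lemma pt_inj: assumes "pt a b x" "pt a b' x'" "x' \<notin> NR" shows "x = x'"
proof -
  have "x' \<in> N a" using assms(2) by (auto simp: pendant_triangle_def N_iff)
  then have "x' \<in> {b,x}" using pt_N[OF assms(1)] by simp
  moreover have "b \<in> NR" using assms(1) unfolding NR_iff by blast
  ultimately show ?thesis using assms(3) by auto
qed

lemma tr_fwd:
  assumes u: "u \<in> FV" "u \<notin> R_tri V E" "u \<notin> R_K4 V E" and st: "strong_vertex V E u"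
  shows "strong_vertex (del_V FV (NF u \<inter> R_tri V E)) (del_E FE (NF u \<inter> R_tri V E)) u"
proof (rule ccontr)
  define X where "X = NF u \<inter> R_tri V E"
  assume ns: "\<not> strong_vertex (del_V FV (NF u \<inter> R_tri V E)) (del_E FE (NF u \<inter> R_tri V E)) u"
  have uX: "u \<notin> X" using u(2) unfolding X_def by blast
  have uV: "u \<in> V" "u \<notin> NR" using u(1) FV_iff by blast+
  have sub: "del_E FE X \<subseteq> E" using delE_iff by blast
  have "u \<in> del_V FV X" using u(1) uX by (simp add: del_V_def)
  then obtain M' where M': "matching (del_E FE X) M'" "u \<notin> \<Union>M'" "\<forall>v. {u,v} \<in> del_E FE X \<longrightarrow> v \<in> \<Union>M'"
    using ns unfolding X_def[symmetric] sub_strong[OF sub] by blast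
  have M'sub0: "M' \<subseteq> del_E FE X" using M'(1) unfolding matching_def by blast
  have M'sub: "e \<in> E \<and> e \<inter> NR = {} \<and> e \<inter> X = {}" if "e \<in> M'" for e
  proof -
    have "e \<in> del_E FE X" using M'sub0 that by (rule subsetD)
    then show ?thesis unfolding delE_iff by simp
  qed
  have M'disj: "\<And>e f. e\<in>M' \<Longrightarrow> f\<in>M' \<Longrightarrow> e\<noteq>f \<Longrightarrow> e\<inter>f={}" using M'(1) unfolding matching_def by blast
  define ta where "ta x = (SOME a. \<exists>b. pt a b x)" for x
  have ta: "\<exists>b. pt (ta x) b x" if xX: "x \<in> X" for x
  proof -
    have "x \<in> R_tri V E" using xX unfolding X_def by blast
    then have "\<exists>a b. pt a b x" by (simp add: Rtri_iff)
    then show ?thesis unfolding ta_def by (rule someI_ex)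
  qed
  have XF: "x \<in> V \<and> x \<notin> NR" if "x \<in> X" for x
    using that unfolding X_def nbhd_def FV_iff by blast
  have taNR: "ta x \<in> NR" "{x, ta x} \<in> E" "deg V E (ta x) = 2" if xX: "x \<in> X" for x
  proof -
    obtain b where b: "pt (ta x) b x" using ta xX by blast
    show "ta x \<in> NR" using b unfolding NR_iff by blast
    show "{x, ta x} \<in> E" using b by (auto simp: pendant_triangle_def insert_commute)
    show "deg V E (ta x) = 2" using b by (auto simp: pendant_triangle_def)
  qed
  define A where "A = (\<lambda>x. {x, ta x}) ` X"
  define B where "B = {{b,c} | b c. \<exists>a. pd a b c u}"
  define M where "M = M' \<union> A \<union> B"
  have Bfacts: "\<exists>b c. e = {b,c} \<and> b \<in> NR \<and> c \<in> NR \<and> deg V E b = 3 \<and> deg V E c = 3 \<and> e \<in> E \<and> (\<exists>a. pd a b c u)"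
    if eB: "e \<in> B" for e
  proof -
    obtain a b c where h: "e = {b,c}" "pd a b c u" using eB unfolding B_def by blast
    have "b \<in> NR" "c \<in> NR" using pd_NR[OF h(2)] by simp_all
    moreover have "deg V E b = 3" "deg V E c = 3" "{b,c} \<in> E" using h(2) by (simp_all add: pendant_diamond_def)
    ultimately show ?thesis using h by blast
  qed
  have MsubE: "M \<subseteq> E" unfolding M_def A_def using M'sub taNR Bfacts by blast
  have disj: "e \<inter> f = {}" if ef: "e \<in> M" "f \<in> M" "e \<noteq> f" for e f
  proof -
    have AA: "e \<inter> f = {}" if ha: "e \<in> A" "f \<in> A" "e \<noteq> f" for e f
    proof -
      obtain x y where xy: "x \<in> X" "y \<in> X" "e = {x, ta x}" "f = {y, ta y}" using ha unfolding A_def by blast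
      have "x \<noteq> y" using xy ha(3) by blast
      moreover have "ta x \<noteq> ta y"
      proof
        assume eq: "ta x = ta y"
        obtain b where b: "pt (ta x) b x" using ta xy(1) by blast
        obtain b' where b': "pt (ta y) b' y" using ta xy(2) by blast
        have "x = y" using pt_inj[OF b] b' eq XF xy(2) by simp
        then show False using \<open>x \<noteq> y\<close> by simp
      qed
      moreover have "x \<noteq> ta y" "y \<noteq> ta x" using XF taNR xy by metis+
      ultimately show ?thesis using xy by auto
    qed
    have AB: "e \<inter> f = {}" if ha: "e \<in> A" "f \<in> B" for e f
    proof -
      obtain x where x: "x \<in> X" "e = {x, ta x}" using ha unfolding A_def by blast
      obtain b c where bc: "f = {b,c}" "b \<in> NR" "c \<in> NR" "deg V E b = 3" "deg V E c = 3"
        using Bfacts ha(2) by blast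
      have "ta x \<noteq> b" "ta x \<noteq> c" using taNR(3)[OF x(1)] bc by auto
      moreover have "x \<noteq> b" "x \<noteq> c" using XF[OF x(1)] bc by auto
      ultimately show ?thesis using x bc by auto
    qed
    have M'A: "e \<inter> f = {}" if ha: "e \<in> M'" "f \<in> A" for e f
    proof -
      obtain x where x: "x \<in> X" "f = {x, ta x}" using ha unfolding A_def by blast
      show ?thesis using M'sub[OF ha(1)] x taNR(1)[OF x(1)] by auto
    qed
    have M'B: "e \<inter> f = {}" if ha: "e \<in> M'" "f \<in> B" for e f
    proof -
      obtain b c where bc: "f = {b,c}" "b \<in> NR" "c \<in> NR" using Bfacts ha(2) by blast
      show ?thesis using M'sub[OF ha(1)] bc by auto
    qed
    have BB: "e \<inter> f = {}" if ha: "e \<in> B" "f \<in> B" "e \<noteq> f" for e f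
    proof -
      obtain b c a where bc: "e = {b,c}" "pd a b c u" using Bfacts ha(1) by blast
      obtain b' c' a' where bc': "f = {b',c'}" "pd a' b' c' u" using Bfacts ha(2) by blast
      show ?thesis using pd_bc[OF bc(2) bc'(2)] bc bc' ha(3) by blast
    qed
    have "e \<in> M' \<or> e \<in> A \<or> e \<in> B" "f \<in> M' \<or> f \<in> A \<or> f \<in> B" using ef unfolding M_def by blast+
    then show ?thesis
      using M'disj[OF _ _ ef(3)] AA[OF _ _ ef(3)] BB[OF _ _ ef(3)] AB M'A M'B
      by (metis inf_commute)
  qed
  have mM: "matching E M" unfolding matching_def using MsubE disj by blast
  have uM: "u \<notin> \<Union>M"
  proof
    assume "u \<in> \<Union>M"
    then obtain e where e: "e \<in> M" "u \<in> e" by blast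
    then consider "e \<in> M'" | "e \<in> A" | "e \<in> B" unfolding M_def by blast
    then show False
    proof cases
      case 1 then show ?thesis using M'(2) e(2) by blast
    next
      case 2
      then obtain x where x: "x \<in> X" "e = {x, ta x}" unfolding A_def by blast
      have "x \<noteq> u" using x(1) uX by blast
      moreover have "ta x \<noteq> u" using taNR(1)[OF x(1)] uV(2) by blast
      ultimately show ?thesis using e(2) x(2) by blast
    next
      case 3
      then obtain b c where "e = {b,c}" "b \<in> NR" "c \<in> NR" using Bfacts by blast
      then show ?thesis using e(2) uV(2) by blast
    qed
  qed
  have covM: "\<forall>v. {u,v} \<in> E \<longrightarrow> v \<in> \<Union>M"
  proof (intro allI impI)
    fix v assume uv: "{u,v} \<in> E"
    show "v \<in> \<Union>M"
    proof (cases "v \<in> NR")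
      case True
      then have "att v u" using nr_nbr uv uV(2) by (simp add: insert_commute)
      then obtain a b c where abc: "pd a b c u" "v \<in> {a,b,c}"
        using u(2,3) unfolding att_def Rtri_iff RK4_iff by blast
      have "v \<noteq> a"
      proof
        assume "v = a"
        then have "u \<in> N a" using uv by (simp add: N_iff insert_commute)
        then have "u \<in> {b,c}" using pd_N(1)[OF abc(1)] by simp
        moreover have "b \<in> NR" "c \<in> NR" using abc(1) unfolding NR_iff by blast+
        ultimately show False using uV(2) by blast
      qed
      then have "v \<in> {b,c}" using abc(2) by blast
      moreover have "{b,c} \<in> M" using abc(1) unfolding M_def B_def by blast
      ultimately show ?thesis by blast
    next
      case False
      show ?thesis
      proof (cases "v \<in> X")
        case True
        then have "{v, ta v} \<in> M" unfolding M_def A_def by blast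
        then show ?thesis by blast
      next
        case vX: False
        have "{u,v} \<in> del_E FE X" using uv uV(2) False vX uX unfolding delE_iff by blast
        then have "v \<in> \<Union>M'" using M'(3) by blast
        then show ?thesis unfolding M_def by blast
      qed
    qed
  qed
  have "\<not> strong_vertex V E u" unfolding strongV_iff using mM uM covM by blast
  then show False using st by blast
qed

end

context sg begin

lemma tri_sub: "tri x y z = {{x,y},{x,z},{y,z}}" by (simp add: tri_def)

lemma tri_12: "tri a b c = tri b a c" unfolding tri_def by (simp add: insert_commute)
lemma tri_23: "tri a b c = tri a c b" unfolding tri_def by (simp add: insert_commute)

lemma tri_edge:
  assumes "{p,q} \<in> tri x y z" "x \<noteq> y" "x \<noteq> z" "y \<noteq> z" "p \<noteq> q"
  shows "\<exists>t. tri x y z = tri p q t \<and> t \<noteq> p \<and> t \<noteq> q"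
proof -
  have "{p,q} = {x,y} \<or> {p,q} = {x,z} \<or> {p,q} = {y,z}" using assms(1) unfolding tri_def by simp
  then have "(p = x \<and> q = y) \<or> (p = y \<and> q = x) \<or> (p = x \<and> q = z) \<or> (p = z \<and> q = x) \<or>
     (p = y \<and> q = z) \<or> (p = z \<and> q = y)" by (auto simp: doubleton_eq_iff)
  then show ?thesis
  proof (elim disjE conjE)
    assume "p = x" "q = y" then show ?thesis using assms(2-4) by blast
  next
    assume "p = y" "q = x" then show ?thesis using assms(2-4) tri_12 by metis
  next
    assume "p = x" "q = z" then show ?thesis using assms(2-4) tri_23 by metis
  next
    assume "p = z" "q = x" then show ?thesis using assms(2-4) tri_23 tri_12 by metis
  next
    assume "p = y" "q = z" then show ?thesis using assms(2-4) tri_23 tri_12 by metis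
  next
    assume "p = z" "q = y" then show ?thesis using assms(2-4) tri_23 tri_12 by metis
  qed
qed

definition goodpart :: "'a set set set \<Rightarrow> bool" where
  "goodpart P \<longleftrightarrow> partition_on E P \<and> (\<forall>C\<in>P. strong_clique E (line_edges E) C)"

lemma loc_iff: "localizable E (line_edges E) \<longleftrightarrow> (\<exists>P. goodpart P)"
  unfolding localizable_def goodpart_def by blast

lemma part_unique: assumes "goodpart P" "C1 \<in> P" "C2 \<in> P" "e \<in> C1" "e \<in> C2" shows "C1 = C2"
proof (rule ccontr)
  assume "C1 \<noteq> C2"
  moreover have "disjoint P" using assms(1) unfolding goodpart_def partition_on_def by blast
  ultimately have "C1 \<inter> C2 = {}" using assms(2,3) disjointD by blast
  then show False using assms(4,5) by blast
qed

lemma part_exists: assumes "goodpart P" "e \<in> E" shows "\<exists>C\<in>P. e \<in> C"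
proof -
  have "\<Union>P = E" using assms(1) unfolding goodpart_def partition_on_def by blast
  then show ?thesis using assms(2) by blast
qed

lemma part_cases:
  assumes "goodpart P" "C \<in> P"
  shows "(\<exists>v. C = estar v \<and> strong_vertex V E v) \<or>
         (\<exists>x y z. x \<noteq> y \<and> x \<noteq> z \<and> y \<noteq> z \<and> C = tri x y z \<and> tri x y z \<subseteq> E \<and>
             (\<forall>M. maximal_matching E M \<longrightarrow> tri x y z \<inter> M \<noteq> {}))"
proof -
  have sc: "strong_clique E (line_edges E) C" using assms unfolding goodpart_def by blast
  have ne: "C \<noteq> {}" using assms unfolding goodpart_def partition_on_def by blast
  have h: "C \<subseteq> E" "\<forall>e\<in>C. \<forall>f\<in>C. e \<noteq> f \<longrightarrow> e \<inter> f \<noteq> {}" "\<forall>M. maximal_matching E M \<longrightarrow> C \<inter> M \<noteq> {}"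
    using sc unfolding sclique_iff by blast+
  from clique_cases[OF h(1) ne h(2)] show ?thesis
  proof
    assume "\<exists>v. C \<subseteq> estar v"
    then obtain v where v: "C \<subseteq> estar v" by blast
    have "C = estar v" "strong_vertex V E v" using star_strong[OF v ne h(3)] by simp_all
    then show ?thesis by blast
  next
    assume "\<exists>a b c. a \<noteq> b \<and> a \<noteq> c \<and> b \<noteq> c \<and> C = tri a b c"
    then obtain a b c where abc: "a \<noteq> b" "a \<noteq> c" "b \<noteq> c" "C = tri a b c" by blast
    then show ?thesis using h(1,3) by blast
  qed
qed

lemma nonempty_max: assumes "maximal_matching E M" "E \<noteq> {}" shows "M \<noteq> {}"
proof
  assume "M = {}"
  obtain e where e: "e \<in> E" using assms(2) by blast
  have "matching E {e}" using e unfolding matching_def by auto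
  then have "{e} = M" using assms(1) \<open>M = {}\<close> unfolding maximal_matching_def by blast
  then show False using \<open>M = {}\<close> by simp
qed

lemma tri_clique: assumes "a \<noteq> b" "a \<noteq> c" "b \<noteq> c" "tri a b c \<subseteq> E"
   "\<forall>M. maximal_matching E M \<longrightarrow> tri a b c \<inter> M \<noteq> {}"
  shows "strong_clique E (line_edges E) (tri a b c)"
  unfolding sclique_iff
proof (intro conjI)
  show "\<forall>e\<in>tri a b c. \<forall>f\<in>tri a b c. e \<noteq> f \<longrightarrow> e \<inter> f \<noteq> {}" unfolding tri_def by auto
qed (use assms in auto)

lemma k4_root_strong:
  assumes NN: "N a \<subseteq> {b,c,d}" "N b \<subseteq> {a,c,d}" "N c \<subseteq> {a,b,d}"
    and ed: "{d,a} \<in> E" "{d,b} \<in> E" "{d,c} \<in> E" "d \<in> V" and dd: "distinct [a,b,c,d]"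
  shows "strong_vertex V E d"
  unfolding strongV_iff
proof
  show "d \<in> V" by fact
  show "\<not>(\<exists>M. matching E M \<and> d \<notin> \<Union>M \<and> (\<forall>v. {d,v} \<in> E \<longrightarrow> v \<in> \<Union>M))"
  proof
    assume "\<exists>M. matching E M \<and> d \<notin> \<Union>M \<and> (\<forall>v. {d,v} \<in> E \<longrightarrow> v \<in> \<Union>M)"
    then obtain M where M: "matching E M" "d \<notin> \<Union>M" "\<forall>v. {d,v} \<in> E \<longrightarrow> v \<in> \<Union>M" by blast
    have sub: "M \<subseteq> E" using M(1) unfolding matching_def by blast
    have md: "\<And>e f. e \<in> M \<Longrightarrow> f \<in> M \<Longrightarrow> e \<noteq> f \<Longrightarrow> e \<inter> f = {}" using M(1) unfolding matching_def by blast
    have cov: "\<exists>y. {x,y} \<in> M \<and> y \<in> {a,b,c} - {x}" if xx: "x \<in> {a,b,c}" for x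
    proof -
      have "{d,x} \<in> E" using xx ed by auto
      then have "x \<in> \<Union>M" using M(3) by blast
      then obtain y where y: "{x,y} \<in> M" "y \<in> N x" using cov_edge sub by blast
      have "y \<noteq> d" using y M(2) by auto
      moreover have "y \<noteq> x" using y edge_neq sub by blast
      ultimately show ?thesis using y NN xx by auto
    qed
    obtain y where y: "{a,y} \<in> M" "y \<in> {b,c}" using cov[of a] dd by auto
    let ?w = "if y = b then c else b"
    have w: "?w \<in> {a,b,c}" "?w \<noteq> a" "?w \<noteq> y" using y dd by auto
    obtain t where t: "{?w,t} \<in> M" "t \<in> {a,b,c} - {?w}" using cov[of ?w] w(1) by blast
    have "t = a \<or> t = y" using t y dd by auto
    then show False
    proof
      assume "t = a"
      then have "{?w,a} \<inter> {a,y} \<noteq> {}" by auto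
      moreover have "{?w,a} \<noteq> {a,y}" using w by (auto simp: doubleton_eq_iff)
      ultimately show False using md t(1) y(1) \<open>t = a\<close> by blast
    next
      assume "t = y"
      then have "{?w,y} \<inter> {a,y} \<noteq> {}" by auto
      moreover have "{?w,y} \<noteq> {a,y}" using w by (auto simp: doubleton_eq_iff)
      ultimately show False using md t(1) y(1) \<open>t = y\<close> by blast
    qed
  qed
qed

lemma k4_tri_strong:
  assumes NN: "N a \<subseteq> {b,c,d}" "N b \<subseteq> {a,c,d}" "N c \<subseteq> {a,b,d}"
    and E3: "{a,b} \<in> E" "{a,c} \<in> E" "{b,c} \<in> E" and dd: "distinct [a,b,c,d]"
    and M: "maximal_matching E M"
  shows "tri a b c \<inter> M \<noteq> {}"
proof
  assume h: "tri a b c \<inter> M = {}"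
  have sub: "M \<subseteq> E" using mm_sub M .
  have cd: "{x,d} \<in> M" if xx: "x \<in> {a,b,c}" "x \<in> \<Union>M" for x
  proof -
    obtain y where y: "{x,y} \<in> M" "y \<in> N x" using cov_edge sub xx(2) by blast
    have "y \<noteq> x" using y edge_neq sub by blast
    then have "y = d" using y h NN xx(1) unfolding tri_def by (auto simp: insert_commute)
    then show ?thesis using y by simp
  qed
  have one: "x = y" if xx: "x \<in> {a,b,c}" "y \<in> {a,b,c}" "x \<in> \<Union>M" "y \<in> \<Union>M" for x y
  proof -
    have "{d,x} \<in> M" "{d,y} \<in> M" using cd[OF xx(1) xx(3)] cd[OF xx(2) xx(4)] by (simp_all add: insert_commute)
    then show ?thesis using two_match[OF M] by blast
  qed
  show False
  proof (cases "a \<in> \<Union>M")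
    case True
    have "b \<notin> \<Union>M"
    proof
      assume "b \<in> \<Union>M" then have "a = b" using one[of a b] True by simp
      then show False using dd by simp
    qed
    then have "c \<in> \<Union>M" using mm_cov M E3(3) by blast
    then have "a = c" using one[of a c] True by simp
    then show False using dd by simp
  next
    case False
    then have "b \<in> \<Union>M" "c \<in> \<Union>M" using mm_cov M E3 by blast+
    then have "b = c" using one[of b c] by simp
    then show False using dd by simp
  qed
qed

end

lemma KE_iff: "{i,j} \<in> K_E n \<longleftrightarrow> i < n \<and> j < n \<and> i \<noteq> j"
proof
  assume "{i,j} \<in> K_E n"
  then obtain i' j' where h: "{i,j} = {i',j'}" "i' < n" "j' < n" "i' \<noteq> j'" unfolding K_E_def by blast
  then have "(i = i' \<and> j = j') \<or> (i = j' \<and> j = i')" by (metis doubleton_eq_iff)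
  then show "i < n \<and> j < n \<and> i \<noteq> j" using h by auto
qed (auto simp: K_E_def)

context sg begin

lemma iso_K: "isomorphic V E (K_V n) (K_E n) \<longleftrightarrow> card V = n \<and> (\<forall>u\<in>V. \<forall>v\<in>V. u \<noteq> v \<longrightarrow> {u,v} \<in> E)"
proof
  assume "isomorphic V E (K_V n) (K_E n)"
  then obtain f where f: "bij_betw f V {0..<n}" "\<forall>u\<in>V. \<forall>v\<in>V. {u,v} \<in> E \<longleftrightarrow> {f u, f v} \<in> K_E n"
    unfolding isomorphic_def K_V_def by blast
  have "card V = n" using bij_betw_same_card[OF f(1)] by simp
  moreover have "{u,v} \<in> E" if uv: "u \<in> V" "v \<in> V" "u \<noteq> v" for u v
  proof -
    have "f u \<noteq> f v" using f(1) uv unfolding bij_betw_def inj_on_def by blast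
    moreover have "f u < n" "f v < n" using f(1) uv unfolding bij_betw_def by auto
    ultimately have "{f u, f v} \<in> K_E n" by (simp add: KE_iff)
    then show ?thesis using f(2) uv by blast
  qed
  ultimately show "card V = n \<and> (\<forall>u\<in>V. \<forall>v\<in>V. u \<noteq> v \<longrightarrow> {u,v} \<in> E)" by blast
next
  assume h: "card V = n \<and> (\<forall>u\<in>V. \<forall>v\<in>V. u \<noteq> v \<longrightarrow> {u,v} \<in> E)"
  obtain f where f: "bij_betw f V {0..<n}" using finite_same_card_bij[OF finV, of "{0..<n}"] h by auto
  have "{u,v} \<in> E \<longleftrightarrow> {f u, f v} \<in> K_E n" if uv: "u \<in> V" "v \<in> V" for u v
  proof -
    have "f u < n" "f v < n" using f uv unfolding bij_betw_def by auto
    moreover have "f u = f v \<longleftrightarrow> u = v" using f uv unfolding bij_betw_def inj_on_def by blast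
    ultimately have "{f u, f v} \<in> K_E n \<longleftrightarrow> u \<noteq> v" by (simp add: KE_iff)
    moreover have "{u,v} \<in> E \<longleftrightarrow> u \<noteq> v" using h uv edge_neq by blast
    ultimately show ?thesis by simp
  qed
  then show "isomorphic V E (K_V n) (K_E n)" unfolding isomorphic_def K_V_def using f by blast
qed

lemma iso_dia:
  assumes "isomorphic V E diamond_V diamond_E"
  shows "\<exists>a b c d. distinct [a,b,c,d] \<and> V = {a,b,c,d} \<and> E = {{a,b},{a,c},{b,c},{b,d},{c,d}}"
proof -
  obtain f where f: "bij_betw f V diamond_V" "\<forall>u\<in>V. \<forall>v\<in>V. {u,v} \<in> E \<longleftrightarrow> {f u, f v} \<in> diamond_E"
    using assms unfolding isomorphic_def by blast
  define g where "g = inv_into V f"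
  have g: "bij_betw g diamond_V V" unfolding g_def using f(1) by (rule bij_betw_inv_into)
  have fg: "f (g i) = i" if "i \<in> diamond_V" for i
    unfolding g_def using f(1) that by (simp add: bij_betw_def f_inv_into_f)
  have gf: "g (f v) = v" if "v \<in> V" for v
    unfolding g_def using f(1) that by (simp add: bij_betw_def inv_into_f_f)
  have gV: "g i \<in> V" if "i \<in> diamond_V" for i using g that unfolding bij_betw_def by blast
  have fV: "f v \<in> diamond_V" if "v \<in> V" for v using f(1) that unfolding bij_betw_def by blast
  define a where "a = g 0"
  define b where "b = g 1"
  define c where "c = g 2"
  define d where "d = g 3"
  have dV: "diamond_V = {0,1,2,3}" by (simp add: diamond_V_def)
  have VV: "V = g ` diamond_V" using g unfolding bij_betw_def by simp
  then have V4: "V = {a,b,c,d}" unfolding a_def b_def c_def d_def dV by simp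
  have inj: "inj_on g diamond_V" using g unfolding bij_betw_def by blast
  have dist: "distinct [a,b,c,d]" unfolding a_def b_def c_def d_def
    using inj unfolding inj_on_def dV by auto
  have edge: "{u,v} \<in> E \<longleftrightarrow> {f u, f v} \<in> diamond_E" if "u \<in> V" "v \<in> V" for u v
    using f(2) that by blast
  have E5: "E = {{a,b},{a,c},{b,c},{b,d},{c,d}}"
  proof
    show "E \<subseteq> {{a,b},{a,c},{b,c},{b,d},{c,d}}"
    proof
      fix e assume e: "e \<in> E"
      then obtain u v where uv: "e = {u,v}" "u \<in> V" "v \<in> V" using edgeE by blast
      then have fe: "{f u, f v} \<in> diamond_E" using edge e by blast
      have "{g (f u), g (f v)} = g ` {f u, f v}" by simp
      moreover have "{g (f u), g (f v)} = e" using uv gf by simp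
      moreover have "{f u, f v} = {0,1} \<or> {f u, f v} = {0,2} \<or> {f u, f v} = {1,2} \<or> {f u, f v} = {1,3} \<or> {f u, f v} = {2,3}"
        using fe unfolding diamond_E_def by simp
      ultimately have "e = {a,b} \<or> e = {a,c} \<or> e = {b,c} \<or> e = {b,d} \<or> e = {c,d}"
        unfolding a_def b_def c_def d_def by (elim disjE) simp_all
      then show "e \<in> {{a,b},{a,c},{b,c},{b,d},{c,d}}" by simp
    qed
  next
    have ab: "a \<in> V" "b \<in> V" "c \<in> V" "d \<in> V" using V4 by auto
    have ff: "f a = 0" "f b = 1" "f c = 2" "f d = 3" unfolding a_def b_def c_def d_def using fg dV by auto
    show "{{a,b},{a,c},{b,c},{b,d},{c,d}} \<subseteq> E"
      using edge[OF ab(1) ab(2)] edge[OF ab(1) ab(3)] edge[OF ab(2) ab(3)] edge[OF ab(2) ab(4)] edge[OF ab(3) ab(4)] ff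
      by (simp add: diamond_E_def)
  qed
  show ?thesis using dist V4 E5 by blast
qed

lemma part_of_edge:
  assumes P: "goodpart P" and C: "C \<in> P" "{p,q} \<in> C" and ns: "\<not> strong_vertex V E p"
  shows "(C = estar q \<and> strong_vertex V E q) \<or>
    (\<exists>t. C = tri p q t \<and> {p,t} \<in> E \<and> {q,t} \<in> E \<and> t \<noteq> p \<and> t \<noteq> q \<and>
        (\<forall>M. maximal_matching E M \<longrightarrow> tri p q t \<inter> M \<noteq> {}))"
proof -
  from part_cases[OF P C(1)] show ?thesis
  proof
    assume "\<exists>v. C = estar v \<and> strong_vertex V E v"
    then obtain v where v: "C = estar v" "strong_vertex V E v" by blast
    then have "v \<in> {p,q}" using C(2) unfolding estar_def by blast
    then have "v = q" using v(2) ns by blast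
    then show ?thesis using v by blast
  next
    assume "\<exists>x y z. x \<noteq> y \<and> x \<noteq> z \<and> y \<noteq> z \<and> C = tri x y z \<and> tri x y z \<subseteq> E \<and>
             (\<forall>M. maximal_matching E M \<longrightarrow> tri x y z \<inter> M \<noteq> {})"
    then obtain x y z where h: "x \<noteq> y" "x \<noteq> z" "y \<noteq> z" "C = tri x y z" "tri x y z \<subseteq> E"
      "\<forall>M. maximal_matching E M \<longrightarrow> tri x y z \<inter> M \<noteq> {}" by blast
    have "p \<noteq> q" using C(2) h(4,5) edge_neq by blast
    then obtain t where t: "tri x y z = tri p q t" "t \<noteq> p" "t \<noteq> q" using tri_edge C(2) h by metis
    have "{p,t} \<in> E" "{q,t} \<in> E" using h(5) t(1) unfolding tri_def by auto
    then show ?thesis using h t by metis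
  qed
qed

lemma K3_loc: assumes "card V = 3" "\<forall>u\<in>V. \<forall>v\<in>V. u \<noteq> v \<longrightarrow> {u,v} \<in> E"
  shows "localizable E (line_edges E)"
proof -
  obtain a b c where abc: "V = {a,b,c}" "distinct [a,b,c]" using card3_ex assms(1) by blast
  have ET: "E = tri a b c"
  proof
    show "E \<subseteq> tri a b c"
    proof
      fix e assume "e \<in> E"
      then obtain u v where "e = {u,v}" "u \<noteq> v" "u \<in> V" "v \<in> V" using edgeE by blast
      then show "e \<in> tri a b c" using abc unfolding tri_def by (auto simp: insert_commute)
    qed
    show "tri a b c \<subseteq> E" using assms(2) abc unfolding tri_def by auto
  qed
  have "E \<noteq> {}" using ET unfolding tri_def by simp
  have str: "\<forall>M. maximal_matching E M \<longrightarrow> tri a b c \<inter> M \<noteq> {}"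
  proof (intro allI impI)
    fix M assume M: "maximal_matching E M"
    then have "M \<noteq> {}" "M \<subseteq> E" using nonempty_max \<open>E \<noteq> {}\<close> mm_sub by blast+
    then show "tri a b c \<inter> M \<noteq> {}" using ET by blast
  qed
  have "strong_clique E (line_edges E) (tri a b c)" using tri_clique abc ET str by simp
  moreover have "partition_on E {E}" using \<open>E \<noteq> {}\<close> by (rule partition_on_space)
  ultimately show ?thesis unfolding localizable_def using ET by auto
qed

lemma K4_loc: assumes "card V = 4" "\<forall>u\<in>V. \<forall>v\<in>V. u \<noteq> v \<longrightarrow> {u,v} \<in> E"
  shows "localizable E (line_edges E)"
proof -
  obtain a b c d where abc: "V = {a,b,c,d}" "distinct [a,b,c,d]" using card4_ex assms(1) by blast
  have ed: "{x,y} \<in> E" if "x \<in> {a,b,c,d}" "y \<in> {a,b,c,d}" "x \<noteq> y" for x y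
    using assms(2) abc that by blast
  have Nsub: "N x \<subseteq> {a,b,c,d} - {x}" for x
  proof
    fix y assume "y \<in> N x"
    then have xy: "{x,y} \<in> E" by (simp add: N_iff)
    then have "y \<in> V" "x \<noteq> y" using edge_V edge_neq by blast+
    then show "y \<in> {a,b,c,d} - {x}" using abc(1) by blast
  qed
  have N3: "N a \<subseteq> {b,c,d}" "N b \<subseteq> {a,c,d}" "N c \<subseteq> {a,b,d}" using Nsub[of a] Nsub[of b] Nsub[of c] abc(2) by auto
  have E6: "{a,b} \<in> E" "{a,c} \<in> E" "{b,c} \<in> E" "{d,a} \<in> E" "{d,b} \<in> E" "{d,c} \<in> E"
    using ed abc(2) by auto
  have dV: "d \<in> V" using abc by simp
  have sd: "strong_vertex V E d" using k4_root_strong[OF N3 E6(4-6) dV abc(2)] .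
  have st: "\<forall>M. maximal_matching E M \<longrightarrow> tri a b c \<inter> M \<noteq> {}"
    using k4_tri_strong[OF N3 E6(1-3) abc(2)] by blast
  have dist3: "a \<noteq> b" "a \<noteq> c" "b \<noteq> c" using abc(2) by auto
  have triE: "tri a b c \<subseteq> E" using E6 unfolding tri_def by auto
  define P where "P = {tri a b c, estar d}"
  have cov: "\<Union>P = E"
  proof
    show "\<Union>P \<subseteq> E" unfolding P_def estar_def using triE by auto
    show "E \<subseteq> \<Union>P"
    proof
      fix e assume e: "e \<in> E"
      then obtain u v where uv: "e = {u,v}" "u \<noteq> v" "u \<in> V" "v \<in> V" using edgeE by blast
      show "e \<in> \<Union>P"
      proof (cases "d \<in> e")
        case True then show ?thesis using e unfolding P_def estar_def by blast
      next
        case False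
        then have "u \<in> {a,b,c}" "v \<in> {a,b,c}" using uv abc by auto
        then have "e \<in> tri a b c" using uv unfolding tri_def by (auto simp: insert_commute)
        then show ?thesis unfolding P_def by blast
      qed
    qed
  qed
  have dj: "tri a b c \<inter> estar d = {}" using abc(2) unfolding tri_def estar_def by auto
  have part: "partition_on E P"
  proof (rule partition_onI)
    show "\<Union>P = E" by (rule cov)
    fix p q assume "p \<in> P" "q \<in> P" "p \<noteq> q"
    then show "disjnt p q" using dj unfolding P_def disjnt_def by auto
  next
    have "{a,b} \<in> tri a b c" unfolding tri_def by simp
    moreover have "{d,a} \<in> estar d" using E6 unfolding estar_def by simp
    ultimately show "{} \<notin> P" unfolding P_def by auto
  qed
  have "\<forall>C\<in>P. strong_clique E (line_edges E) C"
    unfolding P_def using tri_clique[OF dist3 triE st] estar_sclique[OF sd] by blast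
  then show ?thesis unfolding localizable_def using part by blast
qed

lemma dia_notloc:
  assumes "distinct [a,b,c,d]" "V = {a,b,c,d}" "E = {{a,b},{a,c},{b,c},{b,d},{c,d}}"
  shows "\<not> localizable E (line_edges E)"
proof
  assume "localizable E (line_edges E)"
  then obtain P where P: "goodpart P" using loc_iff by blast
  have Na: "N a \<subseteq> {b,c}"
  proof
    fix y assume "y \<in> N a"
    then have "{a,y} \<in> E" by (simp add: N_iff)
    then have "{a,y} \<in> {{a,b},{a,c},{b,c},{b,d},{c,d}}" using assms(3) by simp
    then show "y \<in> {b,c}" using assms(1) by (auto simp: doubleton_eq_iff)
  qed
  have Nd: "N d \<subseteq> {b,c}"
  proof
    fix y assume "y \<in> N d"
    then have "{d,y} \<in> E" by (simp add: N_iff)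
    then have "{d,y} \<in> {{a,b},{a,c},{b,c},{b,d},{c,d}}" using assms(3) by simp
    then show "y \<in> {b,c}" using assms(1) by (auto simp: doubleton_eq_iff)
  qed
  have mbc: "matching E {{b,c}}" using assms(3) unfolding matching_def by auto
  have nsa: "\<not> strong_vertex V E a" by (rule notstrong_by[OF mbc]) (use Na assms(1) in auto)
  have nsd: "\<not> strong_vertex V E d" by (rule notstrong_by[OF mbc]) (use Nd assms(1) in auto)
  obtain C1 where C1: "C1 \<in> P" "{a,b} \<in> C1" using part_exists[OF P] assms(3) by auto
  obtain C2 where C2: "C2 \<in> P" "{d,c} \<in> C2" using part_exists[OF P] assms(3) by (auto simp: insert_commute)
  have c1: "C1 = estar b \<or> C1 = tri a b c"
  proof -
    from part_of_edge[OF P C1 nsa] show ?thesis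
    proof (elim disjE exE conjE)
      fix t assume "C1 = tri a b t" "{a,t} \<in> E" "t \<noteq> b"
      then have "C1 = tri a b t" "t \<in> N a" "t \<noteq> b" by (auto simp: N_iff)
      then show ?thesis using Na by auto
    qed simp
  qed
  have c2: "C2 = estar c \<or> C2 = tri d c b"
  proof -
    from part_of_edge[OF P C2 nsd] show ?thesis
    proof (elim disjE exE conjE)
      fix t assume "C2 = tri d c t" "{d,t} \<in> E" "t \<noteq> c"
      then have "C2 = tri d c t" "t \<in> N d" "t \<noteq> c" by (auto simp: N_iff)
      then show ?thesis using Nd by auto
    qed simp
  qed
  have bcE: "{b,c} \<in> E" using assms(3) by simp
  have "{b,c} \<in> C1" using c1 bcE unfolding estar_def tri_def by auto
  moreover have "{b,c} \<in> C2" using c2 bcE unfolding estar_def tri_def by (auto simp: insert_commute)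
  ultimately have "C1 = C2" using part_unique[OF P C1(1) C2(1)] by blast
  then have ab2: "{a,b} \<in> C2" using C1 by simp
  from c2 show False
  proof
    assume "C2 = estar c"
    then have "c \<in> {a,b}" using ab2 unfolding estar_def by blast
    then show False using assms(1) by auto
  next
    assume "C2 = tri d c b"
    then have "a \<in> {d,c,b}" using ab2 unfolding tri_def by blast
    then show False using assms(1) by auto
  qed
qed

end

lemma pair_in_tri: assumes "p \<in> {a,b,c}" "q \<in> {a,b,c}" "p \<noteq> q" shows "{p,q} \<in> {{a,b},{a,c},{b,c}}"
proof -
  have p: "p = a \<or> p = b \<or> p = c" and q: "q = a \<or> q = b \<or> q = c" using assms by auto
  show ?thesis using p q assms(3) by (elim disjE) (simp_all add: insert_commute)
qed

locale bip = sg +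
  fixes U W :: "'a set"
  assumes bp: "bipartition FV FE U W"
    and rd: "R_dia V E \<union> R_K4 V E \<subseteq> U"
    and rt: "R_tri V E \<subseteq> W"
begin

lemma UW: "U \<inter> W = {}" "U \<union> W = FV" "U \<subseteq> FV" "W \<subseteq> FV"
  using bp unfolding bipartition_def by auto

lemma indU: "u \<in> U \<Longrightarrow> v \<in> U \<Longrightarrow> {u,v} \<notin> FE"
  using bp unfolding bipartition_def independent_def by blast
lemma indW: "u \<in> W \<Longrightarrow> v \<in> W \<Longrightarrow> {u,v} \<notin> FE"
  using bp unfolding bipartition_def independent_def by blast

lemma U_nNR: "u \<in> U \<Longrightarrow> u \<notin> NR \<and> u \<in> V" using UW(3) FV_iff by blast
lemma W_nNR: "u \<in> W \<Longrightarrow> u \<notin> NR \<and> u \<in> V" using UW(4) FV_iff by blast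

definition tz :: "'a \<Rightarrow> 'a set set" where
  "tz z = {f \<in> E. f \<subseteq> insert z (N z) \<and> f \<inter> U = {}}"

definition tpart :: "'a set set \<Rightarrow> bool" where
  "tpart C \<longleftrightarrow> (\<exists>a b c. C = tri a b c \<and> (pt a b c \<or> (\<exists>d. pd a b c d) \<or> (\<exists>d. pk a b c d)))"

lemma tzL:
  assumes "{a,b,c} \<subseteq> insert z (N z)" "insert z (N z) - U \<subseteq> {a,b,c}" "a \<notin> U" "b \<notin> U" "c \<notin> U"
    "tri a b c \<subseteq> E"
  shows "tz z = tri a b c"
proof
  show "tz z \<subseteq> tri a b c"
  proof
    fix f assume f: "f \<in> tz z"
    then have fE: "f \<in> E" and fS: "f \<subseteq> insert z (N z)" and fU: "f \<inter> U = {}" unfolding tz_def by blast+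
    obtain p q where pq: "p \<noteq> q" "f = {p,q}" using two_cases fE by blast
    have "p \<in> {a,b,c}" "q \<in> {a,b,c}" using fS fU assms(2) pq by blast+
    then show "f \<in> tri a b c" using pair_in_tri pq unfolding tri_def by simp
  qed
  show "tri a b c \<subseteq> tz z"
  proof
    fix f assume f: "f \<in> tri a b c"
    then have "f \<subseteq> {a,b,c}" unfolding tri_def by auto
    then show "f \<in> tz z" unfolding tz_def using f assms(1,3-6) by blast
  qed
qed

lemma tpart_facts:
  assumes "tpart C"
  obtains a b c where "C = tri a b c" "a \<noteq> b" "a \<noteq> c" "b \<noteq> c" "tri a b c \<subseteq> E"
    "\<And>z. z \<in> {a,b,c} \<Longrightarrow> z \<in> NR \<Longrightarrow> C = tz z"
    "a \<in> NR" "b \<in> NR" "\<forall>M. maximal_matching E M \<longrightarrow> tri a b c \<inter> M \<noteq> {}"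
proof -
  obtain a b c where C: "C = tri a b c" and cs: "pt a b c \<or> (\<exists>d. pd a b c d) \<or> (\<exists>d. pk a b c d)"
    using assms unfolding tpart_def by blast
  from cs show ?thesis
  proof (elim disjE exE)
    assume h: "pt a b c"
    note NN = pt_N[OF h] and dg = pt_deg[OF h]
    have "c \<in> R_tri V E" using h unfolding Rtri_iff by blast
    then have cW: "c \<in> W" using rt by blast
    have cU: "c \<notin> U" "c \<notin> NR" using cW UW(1) W_nNR by blast+
    have abU: "a \<notin> U" "b \<notin> U" "a \<in> NR" "b \<in> NR" using pt_NR[OF h] U_nNR by blast+
    have tE: "tri a b c \<subseteq> E" using dg unfolding tri_def by auto
    have tz: "C = tz z" if "z \<in> {a,b,c}" "z \<in> NR" for z
    proof -
      have "z = a \<or> z = b" using that cU by blast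
      then show ?thesis
      proof
        assume "z = a" then show ?thesis using tzL[of a b c a] NN abU cU tE C by auto
      next
        assume "z = b" then show ?thesis using tzL[of a b c b] NN abU cU tE C by auto
      qed
    qed
    show ?thesis using that[OF C dg(2-4) tE tz abU(3,4)] pt_tri_strong[OF h] by blast
  next
    fix d assume h: "pd a b c d"
    note NN = pd_N[OF h] and dg = pd_deg[OF h]
    have "d \<in> R_dia V E" using h unfolding Rdia_iff by blast
    then have dU: "d \<in> U" using rd by blast
    have abU: "a \<notin> U" "b \<notin> U" "c \<notin> U" "a \<in> NR" "b \<in> NR" "c \<in> NR" using pd_NR[OF h] U_nNR by blast+
    have tE: "tri a b c \<subseteq> E" using dg unfolding tri_def by auto
    have tz: "C = tz z" if "z \<in> {a,b,c}" "z \<in> NR" for z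
    proof -
      have "z = a \<or> z = b \<or> z = c" using that by blast
      then show ?thesis
      proof (elim disjE)
        assume "z = a" then show ?thesis using tzL[of a b c a] NN abU tE C by auto
      next
        assume "z = b" then show ?thesis using tzL[of a b c b] NN abU tE C dU by auto
      next
        assume "z = c" then show ?thesis using tzL[of a b c c] NN abU tE C dU by auto
      qed
    qed
    have "a \<noteq> b" "a \<noteq> c" "b \<noteq> c" using dg by auto
    then show ?thesis using that[OF C _ _ _ tE tz abU(4,5)] pd_tri_strong[OF h] by blast
  next
    fix d assume h: "pk a b c d"
    note NN = pk_N[OF h] and dg = pk_deg[OF h]
    have "d \<in> R_K4 V E" using h unfolding RK4_iff by blast
    then have dU: "d \<in> U" using rd by blast
    have abU: "a \<notin> U" "b \<notin> U" "c \<notin> U" "a \<in> NR" "b \<in> NR" "c \<in> NR" using pk_NR[OF h] U_nNR by blast+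
    have tE: "tri a b c \<subseteq> E" using dg unfolding tri_def by auto
    have tz: "C = tz z" if "z \<in> {a,b,c}" "z \<in> NR" for z
    proof -
      have "z = a \<or> z = b \<or> z = c" using that by blast
      then show ?thesis
      proof (elim disjE)
        assume "z = a" then show ?thesis using tzL[of a b c a] NN abU tE C dU by auto
      next
        assume "z = b" then show ?thesis using tzL[of a b c b] NN abU tE C dU by auto
      next
        assume "z = c" then show ?thesis using tzL[of a b c c] NN abU tE C dU by auto
      qed
    qed
    have "a \<noteq> b" "a \<noteq> c" "b \<noteq> c" using dg by auto
    then show ?thesis using that[OF C _ _ _ tE tz abU(4,5)] pk_tri_strong[OF h] by blast
  qed
qed

end

context sg begin
lemma has_nbr: assumes "connected_graph V E" "E \<noteq> {}" "u \<in> V" shows "\<exists>v. {u,v} \<in> E"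
proof -
  obtain e where e: "e \<in> E" using assms(2) by blast
  then obtain x y where xy: "x \<noteq> y" "e = {x,y}" "x \<in> V" "y \<in> V" using edgeE by blast
  obtain w where w: "w \<in> V" "w \<noteq> u" using xy by metis
  have "(u,w) \<in> {(x,y). {x,y} \<in> E}\<^sup>*" using assms(1,3) w(1) unfolding connected_graph_def by blast
  then show ?thesis using w(2) by (cases rule: converse_rtranclE) auto
qed
end

context bip begin

lemma U_strong:
  assumes cond: "\<forall>u\<in>U - R_K4 V E. strong_vertex (del_V FV (NF u \<inter> R_tri V E)) (del_E FE (NF u \<inter> R_tri V E)) u"
    and u: "u \<in> U"
  shows "strong_vertex V E u"
proof (cases "u \<in> R_K4 V E")
  case True
  then obtain a b c where "pk a b c u" unfolding RK4_iff by blast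
  then show ?thesis by (rule pk_root_strong)
next
  case False
  have uF: "u \<in> FV" using u UW(3) by blast
  have NW: "y \<in> W" if "y \<in> NF u" for y
  proof -
    have e: "{u,y} \<in> FE" using that NF_iff by blast
    have "y \<in> FV" using that unfolding nbhd_def by blast
    moreover have "y \<notin> U" using indU[OF u] e by blast
    ultimately show ?thesis using UW(2) by blast
  qed
  have h1: "\<forall>y\<in>NF u. y \<notin> R_dia V E \<and> y \<notin> R_K4 V E" using NW rd UW(1) by blast
  have h2: "\<forall>y\<in>NF u. \<forall>z\<in>NF u. {y,z} \<notin> FE" using NW indW by blast
  have "strong_vertex (del_V FV (NF u \<inter> R_tri V E)) (del_E FE (NF u \<inter> R_tri V E)) u"
    using cond u False by blast
  then show ?thesis using tr_back[OF uF h1 h2] by blast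
qed

lemma tpart_nr: assumes "tpart C" "f \<in> C" shows "\<exists>z\<in>f. z \<in> NR"
proof -
  obtain a b c where h: "C = tri a b c" "a \<in> NR" "b \<in> NR" using tpart_facts[OF assms(1)] by metis
  then show ?thesis using assms(2) unfolding tri_def by auto
qed

lemma tpart_eq: assumes "tpart C" "f \<in> C" "z \<in> f" "z \<in> NR" shows "C = tz z"
proof -
  obtain a b c where h: "C = tri a b c" "\<And>z. z \<in> {a,b,c} \<Longrightarrow> z \<in> NR \<Longrightarrow> C = tz z"
    using tpart_facts[OF assms(1)] by metis
  have "f \<subseteq> {a,b,c}" using assms(2) h(1) unfolding tri_def by auto
  then show ?thesis using h(2) assms(3,4) by blast
qed

lemma tpart_U: assumes "tpart C" "f \<in> C" shows "f \<inter> U = {}"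
proof -
  obtain z where "z \<in> f" "z \<in> NR" using tpart_nr assms by blast
  then have "C = tz z" using tpart_eq assms by blast
  then show ?thesis using assms(2) unfolding tz_def by blast
qed

lemma att_tpart: assumes "att z r" shows "tpart (tz z)"
proof -
  have zNR: "z \<in> NR" using att_NR assms by blast
  from assms consider (t) a b where "pt a b r" "z \<in> {a,b}"
    | (d) a b c where "pd a b c r" "z \<in> {a,b,c}"
    | (k) a b c where "pk a b c r" "z \<in> {a,b,c}" unfolding att_def by blast
  then show ?thesis
  proof cases
    case t
    then have tp: "tpart (tri a b r)" unfolding tpart_def by blast
    have "{a,b} \<in> tri a b r" unfolding tri_def by simp
    then have "tri a b r = tz z" using tpart_eq[OF tp] t(2) zNR by blast
    then show ?thesis using tp by simp
  next
    case d
    then have tp: "tpart (tri a b c)" unfolding tpart_def by blast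
    have "\<exists>f\<in>tri a b c. z \<in> f" using d(2) unfolding tri_def by auto
    then have "tri a b c = tz z" using tpart_eq[OF tp] zNR by blast
    then show ?thesis using tp by simp
  next
    case k
    then have tp: "tpart (tri a b c)" unfolding tpart_def by blast
    have "\<exists>f\<in>tri a b c. z \<in> f" using k(2) unfolding tri_def by auto
    then have "tri a b c = tz z" using tpart_eq[OF tp] zNR by blast
    then show ?thesis using tp by simp
  qed
qed

lemma loc_bip:
  assumes cond: "\<forall>u\<in>U - R_K4 V E. strong_vertex (del_V FV (NF u \<inter> R_tri V E)) (del_E FE (NF u \<inter> R_tri V E)) u"
    and conn: "connected_graph V E" and ne: "E \<noteq> {}"
  shows "localizable E (line_edges E)"
proof -
  define P where "P = estar ` U \<union> Collect tpart"
  have tsub: "C \<subseteq> E" if "tpart C" for C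
    using tpart_facts[OF that] by metis
  have cov: "\<Union>P = E"
  proof
    show "\<Union>P \<subseteq> E" unfolding P_def estar_def using tsub by blast
    show "E \<subseteq> \<Union>P"
    proof
      fix e assume e: "e \<in> E"
      show "e \<in> \<Union>P"
      proof (cases "e \<inter> U = {}")
        case False
        then obtain u where "u \<in> e" "u \<in> U" by blast
        then have "e \<in> estar u" "estar u \<in> P" using e unfolding estar_def P_def by auto
        then show ?thesis by blast
      next
        case True
        obtain p q where pq: "p \<noteq> q" "e = {p,q}" "p \<in> V" "q \<in> V" using edgeE e by blast
        have "\<exists>z\<in>e. z \<in> NR"
        proof (rule ccontr)
          assume "\<not> ?thesis"
          then have "p \<notin> NR" "q \<notin> NR" using pq by auto
          then have "{p,q} \<in> FE" "p \<in> FV" "q \<in> FV" using e pq FE_iff FV_iff by auto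
          moreover have "p \<notin> U" "q \<notin> U" using True pq by auto
          ultimately have "p \<in> W" "q \<in> W" using UW(2) by blast+
          then show False using indW \<open>{p,q} \<in> FE\<close> by blast
        qed
        then obtain z where z: "z \<in> e" "z \<in> NR" by blast
        then obtain r where r: "att z r" using NR_att by blast
        have tp: "tpart (tz z)" using att_tpart[OF r] .
        obtain y where y: "e = {z,y}" using other_end e z(1) by blast
        have "y \<in> N z" using e y by (simp add: N_iff)
        then have "e \<in> tz z" unfolding tz_def using e y True by blast
        then show ?thesis unfolding P_def using tp by blast
      qed
    qed
  qed
  have part: "partition_on E P"
  proof (rule partition_onI)
    show "\<Union>P = E" by (rule cov)
  next
    fix p q assume pq: "p \<in> P" "q \<in> P" "p \<noteq> q"
    show "disjnt p q" unfolding disjnt_def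
    proof (rule ccontr)
      assume "p \<inter> q \<noteq> {}"
      then obtain f where f: "f \<in> p" "f \<in> q" by blast
      consider (ss) u v where "u \<in> U" "v \<in> U" "p = estar u" "q = estar v"
        | (st) u where "u \<in> U" "p = estar u" "tpart q"
        | (ts) u where "u \<in> U" "q = estar u" "tpart p"
        | (tt) "tpart p" "tpart q" using pq(1,2) unfolding P_def by blast
      then show False
      proof cases
        case ss
        then have uv: "u \<noteq> v" using pq(3) by blast
        have fE: "f \<in> E" "u \<in> f" "v \<in> f" using f ss unfolding estar_def by auto
        then obtain y where y: "f = {u,y}" using other_end by blast
        then have "f = {u,v}" using fE uv by auto
        then have "{u,v} \<in> FE" using fE U_nNR ss FE_iff by auto
        then show False using indU ss by blast
      next
        case st
        then have "u \<in> f" using f unfolding estar_def by blast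
        then show False using tpart_U[OF st(3) f(2)] st(1) by blast
      next
        case ts
        then have "u \<in> f" using f unfolding estar_def by blast
        then show False using tpart_U[OF ts(3) f(1)] ts(1) by blast
      next
        case tt
        obtain z where z: "z \<in> f" "z \<in> NR" using tpart_nr tt(1) f(1) by blast
        have "p = tz z" "q = tz z" using tpart_eq z tt f by blast+
        then show False using pq(3) by simp
      qed
    qed
  next
    show "{} \<notin> P"
    proof
      assume "{} \<in> P"
      then consider (s) u where "u \<in> U" "{} = estar u" | (t) "tpart {}" unfolding P_def by blast
      then show False
      proof cases
        case s
        then obtain v where "{u,v} \<in> E" using has_nbr[OF conn ne] U_nNR by blast
        then show False using s unfolding estar_def by blast
      next
        case t
        then obtain a b c where "{} = tri a b c" using tpart_facts by metis
        then show False unfolding tri_def by simp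
      qed
    qed
  qed
  have "\<forall>C\<in>P. strong_clique E (line_edges E) C"
  proof
    fix C assume "C \<in> P"
    then consider (s) u where "u \<in> U" "C = estar u" | (t) "tpart C" unfolding P_def by blast
    then show "strong_clique E (line_edges E) C"
    proof cases
      case s
      then show ?thesis using estar_sclique U_strong[OF cond] by blast
    next
      case t
      then obtain a b c where h: "C = tri a b c" "a \<noteq> b" "a \<noteq> c" "b \<noteq> c" "tri a b c \<subseteq> E"
        "\<forall>M. maximal_matching E M \<longrightarrow> tri a b c \<inter> M \<noteq> {}" using tpart_facts by metis
      then show ?thesis using tri_clique by blast
    qed
  qed
  then show ?thesis unfolding localizable_def using part by blast
qed

end

context sg begin

lemma closed_V: assumes conn: "connected_graph V E" and S: "S \<subseteq> V" "u \<in> S" "\<forall>v\<in>S. N v \<subseteq> S"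
  shows "V = S"
proof
  show "V \<subseteq> S"
  proof
    fix v assume v: "v \<in> V"
    have "(u,v) \<in> {(x,y). {x,y} \<in> E}\<^sup>*" using conn v S unfolding connected_graph_def by blast
    then show "v \<in> S"
    proof (induction rule: rtrancl_induct)
      case base then show ?case using S(2) .
    next
      case (step y z)
      then have "z \<in> N y" by (simp add: N_iff)
      then show ?case using step S(3) by blast
    qed
  qed
qed (rule S(1))

lemma E_eq: assumes "V \<subseteq> S" "\<forall>p\<in>S. \<forall>q\<in>N p. {p,q} \<in> D" "D \<subseteq> E" shows "E = D"
proof
  show "E \<subseteq> D"
  proof
    fix e assume "e \<in> E"
    then obtain p q where "e = {p,q}" "p \<in> V" "{p,q} \<in> E" using edgeE by blast
    then show "e \<in> D" using assms(1,2) by (auto simp: N_iff)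
  qed
qed (rule assms(3))

lemma TT0: assumes "a \<noteq> b" "a \<noteq> c" "b \<noteq> c" "{a,b} \<in> E"
  "\<forall>M. maximal_matching E M \<longrightarrow> tri a b c \<inter> M \<noteq> {}"
  "a' \<in> N a" "a' \<notin> {a,b,c}" "b' \<in> N b" "b' \<notin> {a,b,c}" shows "a' = b'"
proof (rule ccontr)
  assume "a' \<noteq> b'"
  moreover have "{a,a'} \<in> E" "{b,b'} \<in> E" using assms(6,8) by (simp_all add: N_iff)
  ultimately obtain M where "maximal_matching E M" "tri a b c \<inter> M = {}"
    using tri_not_strong[OF assms(4)] assms(7,9) by blast
  then show False using assms(5) by blast
qed

lemma card_ge3: "finite A \<Longrightarrow> {p,q,r} \<subseteq> A \<Longrightarrow> distinct [p,q,r] \<Longrightarrow> card A \<ge> 3"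
proof -
  assume a: "finite A" "{p,q,r} \<subseteq> A" "distinct [p,q,r]"
  have "card {p,q,r} = 3" using a(3) by simp
  then show ?thesis using card_mono[OF a(1,2)] by simp
qed

lemma card_ge4: "finite A \<Longrightarrow> {p,q,r,t} \<subseteq> A \<Longrightarrow> distinct [p,q,r,t] \<Longrightarrow> card A \<ge> 4"
proof -
  assume a: "finite A" "{p,q,r,t} \<subseteq> A" "distinct [p,q,r,t]"
  have "card {p,q,r,t} = 4" using a(3) by simp
  then show ?thesis using card_mono[OF a(1,2)] by simp
qed

lemma core:
  assumes conn: "connected_graph V E" and loc: "localizable E (line_edges E)"
    and nK3: "\<not>(card V = 3 \<and> (\<forall>u\<in>V. \<forall>v\<in>V. u \<noteq> v \<longrightarrow> {u,v} \<in> E))"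
    and nK4: "\<not>(card V = 4 \<and> (\<forall>u\<in>V. \<forall>v\<in>V. u \<noteq> v \<longrightarrow> {u,v} \<in> E))"
    and d: "x \<noteq> y" "x \<noteq> w" "y \<noteq> w" and tE: "{x,y} \<in> E" "{x,w} \<in> E" "{y,w} \<in> E"
    and st: "\<forall>M. maximal_matching E M \<longrightarrow> tri x y w \<inter> M \<noteq> {}"
    and nr: "x \<notin> NR" "y \<notin> NR"
    and wl: "\<not>(N x - {x,y,w} = {} \<and> N y - {x,y,w} \<noteq> {})"
  shows False
proof -
  define Ox where "Ox = N x - {x,y,w}"
  define Oy where "Oy = N y - {x,y,w}"
  define Ow where "Ow = N w - {x,y,w}"
  have st2: "\<forall>M. maximal_matching E M \<longrightarrow> tri x w y \<inter> M \<noteq> {}" using st tri_23 by metis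
  have st3: "\<forall>M. maximal_matching E M \<longrightarrow> tri y w x \<inter> M \<noteq> {}" using st tri_23 tri_12 by metis
  have Txy: "p = q" if "p \<in> Ox" "q \<in> Oy" for p q
    using TT0[OF d(1) d(2) d(3) tE(1) st, of p q] that unfolding Ox_def Oy_def by blast
  have Txw: "p = q" if "p \<in> Ox" "q \<in> Ow" for p q
    using TT0[OF d(2) d(1) d(3)[symmetric] tE(2) st2, of p q] that unfolding Ox_def Ow_def by blast
  have Tyw: "p = q" if "p \<in> Oy" "q \<in> Ow" for p q
    using TT0[OF d(3) d(1)[symmetric] d(2)[symmetric] tE(3) st3, of p q] that unfolding Oy_def Ow_def by blast
  have nl: "v \<notin> N v" for v
  proof
    assume "v \<in> N v" then have "{v,v} \<in> E" by (simp add: N_iff)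
    then show False using edge_neq by blast
  qed
  have Nx: "N x = {y,w} \<union> Ox" using tE nl[of x] unfolding Ox_def by (auto simp: N_iff)
  have Ny: "N y = {x,w} \<union> Oy" using tE nl[of y] unfolding Oy_def by (auto simp: N_iff insert_commute)
  have Nw: "N w = {x,y} \<union> Ow" using tE nl[of w] unfolding Ow_def by (auto simp: N_iff insert_commute)
  have xV: "x \<in> V" "y \<in> V" "w \<in> V" using tE edge_V by blast+
  have NRI_t: "a \<in> NR" if "pt a b c" for a b c using pt_NR[OF that] by blast
  have NRI_d: "b \<in> NR" if "pd a b c d" for a b c d using pd_NR[OF that] by blast
  have NRI_k: "a \<in> NR" if "pk a b c d" for a b c d using pk_NR[OF that] by blast
  have sing: "O1 = {s}" if "s \<in> O1" "\<And>p q. p \<in> O1 \<Longrightarrow> q \<in> O2 \<Longrightarrow> p = q" "s \<in> O2" for O1 O2 :: "'a set" and s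
    using that by blast
  show False
  proof (cases "Ox = {}")
    case Ox0: True
    then have Oy0: "Oy = {}" using wl unfolding Ox_def Oy_def by blast
    have Nx2: "N x = {y,w}" "N y = {x,w}" using Nx Ny Ox0 Oy0 by auto
    show False
    proof (cases "Ow = {}")
      case True
      then have Nw2: "N w = {x,y}" using Nw by simp
      have "V = {x,y,w}" by (rule closed_V[OF conn]) (use xV Nx2 Nw2 in auto)
      moreover have "card {x,y,w} = 3" using d by simp
      moreover have "\<forall>u\<in>{x,y,w}. \<forall>v\<in>{x,y,w}. u \<noteq> v \<longrightarrow> {u,v} \<in> E" using tE by (auto simp: insert_commute)
      ultimately show False using nK3 by simp
    next
      case False
      then obtain s where s: "s \<in> Ow" by blast
      have "card (N w) \<ge> 3" by (rule card_ge3[OF finN, of x y s]) (use Nw s d in \<open>auto simp: Ow_def\<close>)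
      then have "pt x y w" unfolding pendant_triangle_def using xV tE d Nx2 by (auto simp: degN insert_commute)
      then show False using NRI_t nr by blast
    qed
  next
    case Oxn: False
    then obtain s where s: "s \<in> Ox" by blast
    have sV: "s \<notin> {x,y,w}" "{x,s} \<in> E" using s unfolding Ox_def by (auto simp: N_iff)
    show False
    proof (cases "Oy = {}")
      case Oy0: True
      have Ny2: "N y = {x,w}" using Ny Oy0 by simp
      show False
      proof (cases "Ow = {}")
        case True
        then have Nw2: "N w = {x,y}" using Nw by simp
        have "card (N x) \<ge> 3" by (rule card_ge3[OF finN, of y w s]) (use Nx s d sV in auto)
        then have "pt y w x" unfolding pendant_triangle_def using xV tE d Ny2 Nw2
          by (auto simp: degN insert_commute)
        then show False using NRI_t nr by blast
      next
        case False
        then obtain s' where s': "s' \<in> Ow" by blast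
        have "s' = s" using Txw[OF s s'] by simp
        then have Ox1: "Ox = {s}" and Ow1: "Ow = {s}" using sing[of s Ox Ow] sing[of s Ow Ox] Txw s s' by blast+
        have Nx3: "N x = {y,w,s}" and Nw3: "N w = {x,y,s}" using Nx Nw Ox1 Ow1 by auto
        have "s \<in> N w" using Nw3 by simp
        then have ws: "{w,s} \<in> E" by (simp add: N_iff)
        have ys: "{y,s} \<notin> E"
        proof
          assume "{y,s} \<in> E" then have "s \<in> N y" by (simp add: N_iff)
          then show False using Ny2 sV(1) by simp
        qed
        show False
        proof (cases "card (N s) \<ge> 3")
          case True
          have "pd y x w s" unfolding pendant_diamond_def using xV tE d sV ws ys Nx3 Nw3 Ny2 True
            edge_V[OF ws] by (auto simp: degN insert_commute)
          then show False using NRI_d nr by blast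
        next
          case False
          have sub: "{x,w} \<subseteq> N s" using sV ws by (auto simp: N_iff insert_commute)
          have "N s \<subseteq> {x,w}"
          proof (rule ccontr)
            assume "\<not> N s \<subseteq> {x,w}"
            then obtain r where r: "r \<in> N s" "r \<notin> {x,w}" by blast
            have "card (N s) \<ge> 3" by (rule card_ge3[OF finN, of x w r]) (use sub r d in auto)
            then show False using False by simp
          qed
          then have Ns: "N s = {x,w}" using sub by blast
          have VV: "V = {y,x,w,s}" by (rule closed_V[OF conn]) (use xV edge_V[OF ws] Nx3 Ny2 Nw3 Ns in auto)
          have EE: "E = {{y,x},{y,w},{x,w},{x,s},{w,s}}"
            by (rule E_eq[of "{y,x,w,s}"]) (use VV Nx3 Ny2 Nw3 Ns tE sV ws in \<open>auto simp: insert_commute\<close>)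
          have "distinct [y,x,w,s]" using d sV by auto
          then show False using dia_notloc[OF _ VV EE] loc by blast
        qed
      qed
    next
      case Oyn: False
      then obtain t where t: "t \<in> Oy" by blast
      have "t = s" using Txy[OF s t] by simp
      then have Ox1: "Ox = {s}" and Oy1: "Oy = {s}" using sing[of s Ox Oy] sing[of s Oy Ox] Txy s t by blast+
      have Nx3: "N x = {y,w,s}" and Ny3: "N y = {x,w,s}" using Nx Ny Ox1 Oy1 by auto
      have "s \<in> N y" using Ny3 by simp
      then have ys: "{y,s} \<in> E" by (simp add: N_iff)
      show False
      proof (cases "Ow = {}")
        case True
        then have Nw2: "N w = {x,y}" using Nw by simp
        have ws: "{w,s} \<notin> E"
        proof
          assume "{w,s} \<in> E" then have "s \<in> N w" by (simp add: N_iff)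
          then show False using Nw2 sV(1) by simp
        qed
        show False
        proof (cases "card (N s) \<ge> 3")
          case True
          have "pd w x y s" unfolding pendant_diamond_def using xV tE d sV ws ys Nx3 Ny3 Nw2 True
            edge_V[OF ys] by (auto simp: degN insert_commute)
          then show False using NRI_d nr by blast
        next
          case False
          have sub: "{x,y} \<subseteq> N s" using sV ys by (auto simp: N_iff insert_commute)
          have "N s \<subseteq> {x,y}"
          proof (rule ccontr)
            assume "\<not> N s \<subseteq> {x,y}"
            then obtain r where r: "r \<in> N s" "r \<notin> {x,y}" by blast
            have "card (N s) \<ge> 3" by (rule card_ge3[OF finN, of x y r]) (use sub r d in auto)
            then show False using False by simp
          qed
          then have Ns: "N s = {x,y}" using sub by blast
          have VV: "V = {w,x,y,s}" by (rule closed_V[OF conn]) (use xV edge_V[OF ys] Nx3 Ny3 Nw2 Ns in auto)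
          have EE: "E = {{w,x},{w,y},{x,y},{x,s},{y,s}}"
            by (rule E_eq[of "{w,x,y,s}"]) (use VV Nx3 Ny3 Nw2 Ns tE sV ys in \<open>auto simp: insert_commute\<close>)
          have "distinct [w,x,y,s]" using d sV by auto
          then show False using dia_notloc[OF _ VV EE] loc by blast
        qed
      next
        case False
        then obtain s' where s': "s' \<in> Ow" by blast
        have "s' = s" using Txw[OF s s'] by simp
        then have Ow1: "Ow = {s}" using sing[of s Ow Ox] Txw s s' by blast
        have Nw3: "N w = {x,y,s}" using Nw Ow1 by auto
        have "s \<in> N w" using Nw3 by simp
        then have ws: "{w,s} \<in> E" by (simp add: N_iff)
        show False
        proof (cases "card (N s) > 3")
          case True
          have "pk x y w s" unfolding pendant_K4_def using xV tE d sV ws ys Nx3 Ny3 Nw3 True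
            edge_V[OF ys] by (auto simp: degN insert_commute)
          then show False using NRI_k nr by blast
        next
          case False
          have sub: "{x,y,w} \<subseteq> N s" using sV ys ws by (auto simp: N_iff insert_commute)
          have "N s \<subseteq> {x,y,w}"
          proof (rule ccontr)
            assume "\<not> N s \<subseteq> {x,y,w}"
            then obtain r where r: "r \<in> N s" "r \<notin> {x,y,w}" by blast
            have "card (N s) \<ge> 4" by (rule card_ge4[OF finN, of x y w r]) (use sub r d in auto)
            then show False using False by simp
          qed
          then have Ns: "N s = {x,y,w}" using sub by blast
          have VV: "V = {x,y,w,s}" by (rule closed_V[OF conn]) (use xV edge_V[OF ys] Nx3 Ny3 Nw3 Ns in auto)
          have dd: "distinct [x,y,w,s]" using d sV(1) by auto
          have "card V = 4" using VV dd by simp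
          moreover have "\<forall>u\<in>V. \<forall>v\<in>V. u \<noteq> v \<longrightarrow> {u,v} \<in> E"
            using VV tE ys ws sV(2) by (auto simp: insert_commute)
          ultimately show False using nK4 by blast
        qed
      qed
    qed
  qed
qed

end

context sg begin

lemma strong_tri_nr:
  assumes conn: "connected_graph V E" and loc: "localizable E (line_edges E)"
    and nK3: "\<not>(card V = 3 \<and> (\<forall>u\<in>V. \<forall>v\<in>V. u \<noteq> v \<longrightarrow> {u,v} \<in> E))"
    and nK4: "\<not>(card V = 4 \<and> (\<forall>u\<in>V. \<forall>v\<in>V. u \<noteq> v \<longrightarrow> {u,v} \<in> E))"
    and d: "x \<noteq> y" "x \<noteq> w" "y \<noteq> w" and tE: "tri x y w \<subseteq> E"
    and st: "\<forall>M. maximal_matching E M \<longrightarrow> tri x y w \<inter> M \<noteq> {}"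
  shows "x \<in> NR \<or> y \<in> NR"
proof (rule ccontr)
  assume nr: "\<not> (x \<in> NR \<or> y \<in> NR)"
  have e: "{x,y} \<in> E" "{x,w} \<in> E" "{y,w} \<in> E" using tE unfolding tri_def by auto
  show False
  proof (cases "N x - {x,y,w} = {} \<and> N y - {x,y,w} \<noteq> {}")
    case False
    show False by (rule core[OF conn loc nK3 nK4 d e st]) (use nr False in auto)
  next
    case True
    have st': "\<forall>M. maximal_matching E M \<longrightarrow> tri y x w \<inter> M \<noteq> {}" using st tri_12 by metis
    have s: "{y,x,w} = {x,y,w}" by auto
    have "\<not> (N y - {y,x,w} = {} \<and> N x - {y,x,w} \<noteq> {})" using True s by simp
    then show False using core[OF conn loc nK3 nK4 d(1)[symmetric] d(3) d(2) _ e(3) e(2) st'] nr e(1)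
      by (simp add: insert_commute)
  qed
qed

lemma estar_same_strong: assumes "estar u = estar v" "strong_vertex V E v" "u \<in> V" shows "strong_vertex V E u"
  unfolding strong_vertex_def
proof (intro conjI allI impI)
  show "u \<in> V" by fact
  fix M assume M: "maximal_matching E M"
  then have "v \<in> \<Union>M" using assms(2) unfolding strong_vertex_def by blast
  then obtain e where e: "e \<in> M" "v \<in> e" by blast
  then have "e \<in> estar v" using mm_sub[OF M] unfolding estar_def by blast
  then have "u \<in> e" using assms(1) unfolding estar_def by blast
  then show "u \<in> \<Union>M" using e by blast
qed

lemma star_same: assumes "estar w = estar d" "w \<noteq> d" shows "N d \<subseteq> {w}"
proof
  fix y assume "y \<in> N d"
  then have "{d,y} \<in> estar d" unfolding estar_def by (simp add: N_iff)
  then have "{d,y} \<in> estar w" using assms(1) by simp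
  then have "w \<in> {d,y}" unfolding estar_def by simp
  then show "y \<in> {w}" using assms(2) by blast
qed

lemma pd_star: assumes P: "goodpart P" and h: "pd a b c d" shows "estar d \<in> P"
proof -
  note NN = pd_N[OF h] and dg = pd_deg[OF h]
  have nsa: "\<not> strong_vertex V E a" and nsb: "\<not> strong_vertex V E b" using pd_ns[OF h] by blast+
  obtain C1 where C1: "C1 \<in> P" "{a,b} \<in> C1" using part_exists[OF P dg(3)] by blast
  have c1: "C1 = tri a b c"
    using part_of_edge[OF P C1 nsa]
  proof (elim disjE exE conjE)
    assume "C1 = estar b" "strong_vertex V E b" then show ?thesis using nsb by simp
  next
    fix t assume t: "C1 = tri a b t" "{a,t} \<in> E" "t \<noteq> b"
    then have "t \<in> N a" by (simp add: N_iff)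
    then have "t = c" using NN t(3) by simp
    then show ?thesis using t by simp
  qed
  obtain C2 where C2: "C2 \<in> P" "{b,d} \<in> C2" using part_exists[OF P dg(6)] by blast
  show ?thesis
    using part_of_edge[OF P C2 nsb]
  proof (elim disjE exE conjE)
    assume "C2 = estar d" then show ?thesis using C2 by simp
  next
    fix t assume t: "C2 = tri b d t" "{b,t} \<in> E" "{d,t} \<in> E" "t \<noteq> b" "t \<noteq> d"
    then have "t \<in> N b" by (simp add: N_iff)
    then have "t = a \<or> t = c" using NN t(5) by simp
    then show ?thesis
    proof
      assume "t = a" then show ?thesis using t(3) dg(8) by (simp add: insert_commute)
    next
      assume tc: "t = c"
      have "{b,c} \<in> C1" using c1 unfolding tri_def by simp
      moreover have "{b,c} \<in> C2" using t(1) tc unfolding tri_def by (simp add: insert_commute)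
      ultimately have "C1 = C2" using part_unique[OF P C1(1) C2(1)] by blast
      then have "{a,b} \<in> tri b d c" using C1 t(1) tc by simp
      then have "a \<in> {b,d,c}" unfolding tri_def by blast
      then show ?thesis using dg(2) by auto
    qed
  qed
qed

lemma pk_star: assumes P: "goodpart P" and h: "pk a b c d" shows "estar d \<in> P"
proof -
  note NN = pk_N[OF h] and dg = pk_deg[OF h]
  have nsa: "\<not> strong_vertex V E a" using pk_ns[OF h] by blast
  obtain x where x: "{d,x} \<in> E" "x \<notin> {a,b,c,d}" using extra_nbr4[OF dg(1)] by blast
  have ad: "{a,d} \<in> E" using dg by simp
  have n1: "\<exists>M. maximal_matching E M \<and> tri a d b \<inter> M = {}"
    by (rule tri_not_strong[OF ad dg(4) x(1)]) (use x dg(2) in auto)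
  have n2: "\<exists>M. maximal_matching E M \<and> tri a d c \<inter> M = {}"
    by (rule tri_not_strong[OF ad dg(3) x(1)]) (use x dg(2) in auto)
  obtain C2 where C2: "C2 \<in> P" "{a,d} \<in> C2" using part_exists[OF P ad] by blast
  show ?thesis
    using part_of_edge[OF P C2 nsa]
  proof (elim disjE exE conjE)
    assume "C2 = estar d" then show ?thesis using C2 by simp
  next
    fix t assume t: "C2 = tri a d t" "{a,t} \<in> E" "t \<noteq> d"
      "\<forall>M. maximal_matching E M \<longrightarrow> tri a d t \<inter> M \<noteq> {}"
    then have "t \<in> N a" by (simp add: N_iff)
    then have "t = b \<or> t = c" using NN t(3) by simp
    then show ?thesis using n1 n2 t(4) by blast
  qed
qed

lemma pt_star: assumes P: "goodpart P" and h: "pt a b c" shows "estar c \<notin> P"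
proof
  assume sc: "estar c \<in> P"
  note NN = pt_N[OF h] and dg = pt_deg[OF h]
  have nsa: "\<not> strong_vertex V E a" and nsb: "\<not> strong_vertex V E b" using pt_ns[OF h] by blast+
  obtain C1 where C1: "C1 \<in> P" "{a,b} \<in> C1" using part_exists[OF P dg(5)] by blast
  have c1: "C1 = tri a b c"
    using part_of_edge[OF P C1 nsa]
  proof (elim disjE exE conjE)
    assume "C1 = estar b" "strong_vertex V E b" then show ?thesis using nsb by simp
  next
    fix t assume t: "C1 = tri a b t" "{a,t} \<in> E" "t \<noteq> b"
    then have "t \<in> N a" by (simp add: N_iff)
    then have "t = c" using NN t(3) by simp
    then show ?thesis using t by simp
  qed
  have "{a,c} \<in> C1" using c1 unfolding tri_def by simp
  moreover have "{a,c} \<in> estar c" using dg unfolding estar_def by simp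
  ultimately have "C1 = estar c" using part_unique[OF P C1(1) sc] by blast
  then have "c \<in> {a,b}" using C1(2) unfolding estar_def by blast
  then show False using dg by auto
qed

lemma loc_fwd:
  assumes conn: "connected_graph V E" and loc: "localizable E (line_edges E)"
    and nK3: "\<not>(card V = 3 \<and> (\<forall>u\<in>V. \<forall>v\<in>V. u \<noteq> v \<longrightarrow> {u,v} \<in> E))"
    and nK4: "\<not>(card V = 4 \<and> (\<forall>u\<in>V. \<forall>v\<in>V. u \<noteq> v \<longrightarrow> {u,v} \<in> E))"
  shows "\<exists>U W. bipartition FV FE U W \<and> R_dia V E \<union> R_K4 V E \<subseteq> U \<and> R_tri V E \<subseteq> W \<and>
     (\<forall>u\<in>U - R_K4 V E. strong_vertex (del_V FV (NF u \<inter> R_tri V E)) (del_E FE (NF u \<inter> R_tri V E)) u)"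
proof -
  obtain P where P: "goodpart P" using loc loc_iff by blast
  define sel where "sel v = (SOME w. w \<in> FV \<and> estar w = estar v)" for v
  define U where "U = {v \<in> FV. estar v \<in> P \<and> v = sel v}"
  define W where "W = FV - U"
  have selp: "sel v \<in> FV \<and> estar (sel v) = estar v" if "v \<in> FV" for v
    unfolding sel_def by (rule someI[of _ v]) (use that in simp)
  have selU: "sel v \<in> U" if "v \<in> FV" "estar v \<in> P" for v
  proof -
    have s: "sel v \<in> FV" "estar (sel v) = estar v" using selp that(1) by blast+
    have gen: "sel a = sel b" if "estar a = estar b" for a b unfolding sel_def using that by simp
    have "sel (sel v) = sel v" using gen[OF s(2)] .
    then show ?thesis unfolding U_def using s that(2) by simp
  qed
  have Uuniq: "u = v" if "u \<in> U" "v \<in> U" "estar u = estar v" for u v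
  proof -
    have "u = sel u" "v = sel v" using that unfolding U_def by blast+
    moreover have "sel u = sel v" unfolding sel_def using that(3) by simp
    ultimately show ?thesis by simp
  qed
  have UP: "estar u \<in> P" "u \<in> FV" if "u \<in> U" for u using that unfolding U_def by blast+
  have Ustrong: "strong_vertex V E u" if u: "u \<in> U" for u
  proof -
    have uV: "u \<in> V" using UP(2)[OF u] FV_iff by blast
    from part_cases[OF P UP(1)[OF u]] show ?thesis
    proof (elim disjE exE conjE)
      fix v assume "estar u = estar v" "strong_vertex V E v"
      then show ?thesis using estar_same_strong uV by blast
    next
      fix x y z assume h: "x \<noteq> y" "x \<noteq> z" "y \<noteq> z" "estar u = tri x y z"
      have "{x,y} \<in> estar u" "{x,z} \<in> estar u" "{y,z} \<in> estar u" using h(4) unfolding tri_def by auto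
      then have "u \<in> {x,y}" "u \<in> {x,z}" "u \<in> {y,z}" unfolding estar_def by blast+
      then show ?thesis using h(1-3) by auto
    qed
  qed
  have bp: "bipartition FV FE U W"
    unfolding bipartition_def independent_def
  proof (intro conjI ballI)
    show "U \<inter> W = {}" "U \<union> W = FV" "U \<subseteq> FV" "W \<subseteq> FV" unfolding W_def U_def by blast+
  next
    fix u v assume uv: "u \<in> U" "v \<in> U"
    show "{u,v} \<notin> FE"
    proof
      assume e: "{u,v} \<in> FE"
      then have eE: "{u,v} \<in> E" using FE_iff by blast
      have "{u,v} \<in> estar u" "{u,v} \<in> estar v" using eE unfolding estar_def by auto
      then have "estar u = estar v" using part_unique[OF P UP(1)[OF uv(1)] UP(1)[OF uv(2)]] by blast
      then have "u = v" using Uuniq uv by blast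
      then show False using eE edge_neq by blast
    qed
  next
    fix u v assume uv: "u \<in> W" "v \<in> W"
    show "{u,v} \<notin> FE"
    proof
      assume e: "{u,v} \<in> FE"
      then have eE: "{u,v} \<in> E" using FE_iff by blast
      have uvF: "u \<in> FV" "v \<in> FV" "u \<notin> U" "v \<notin> U" using uv unfolding W_def by blast+
      have nr: "u \<notin> NR" "v \<notin> NR" using uvF FV_iff by blast+
      have uvn: "u \<noteq> v" using eE edge_neq by blast
      obtain C where C: "C \<in> P" "{u,v} \<in> C" using part_exists[OF P eE] by blast
      from part_cases[OF P C(1)] show False
      proof (elim disjE exE conjE)
        fix t assume t: "C = estar t" "strong_vertex V E t"
        then have "t \<in> {u,v}" using C(2) unfolding estar_def by blast
        then have tF: "t \<in> FV" using uvF by blast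
        have "estar t \<in> P" using t C by simp
        then have sU: "sel t \<in> U" and se: "estar (sel t) = estar t" using selU tF selp by blast+
        have "{u,v} \<in> estar (sel t)" using C(2) t(1) se by simp
        then have "sel t \<in> {u,v}" unfolding estar_def by simp
        then show False using sU uvF by blast
      next
        fix x y z assume h: "x \<noteq> y" "x \<noteq> z" "y \<noteq> z" "C = tri x y z" "tri x y z \<subseteq> E"
          "\<forall>M. maximal_matching E M \<longrightarrow> tri x y z \<inter> M \<noteq> {}"
        obtain t where t: "tri x y z = tri u v t" "t \<noteq> u" "t \<noteq> v"
          using tri_edge[of u v x y z] C(2) h uvn by blast
        have "u \<in> NR \<or> v \<in> NR"
          by (rule strong_tri_nr[OF conn loc nK3 nK4 uvn t(2)[symmetric] t(3)[symmetric]]) (use h t in auto)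
        then show False using nr by blast
      qed
    qed
  qed
  have ra: "R_dia V E \<union> R_K4 V E \<subseteq> U"
  proof
    fix d assume "d \<in> R_dia V E \<union> R_K4 V E"
    then have "d \<in> R_dia V E \<or> d \<in> R_K4 V E" by blast
    then consider (dia) a b c where "pd a b c d" | (k4) a b c where "pk a b c d"
      unfolding Rdia_iff RK4_iff by blast
    then have dfacts: "estar d \<in> P \<and> d \<in> FV \<and> card (N d) \<ge> 3"
    proof cases
      case dia
      have a1: "estar d \<in> P" using pd_star[OF P dia] .
      have dV: "d \<in> V" using dia by (simp add: pendant_diamond_def)
      have "d \<notin> NR" using pd_root[OF dia] .
      with dV have a2: "d \<in> FV" by (simp add: FV_iff)
      have a3: "card (N d) \<ge> 3" using pd_deg(1)[OF dia] .
      show ?thesis using a1 a2 a3 by blast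
    next
      case k4
      have a1: "estar d \<in> P" using pk_star[OF P k4] .
      have dV: "d \<in> V" using k4 by (simp add: pendant_K4_def)
      have "d \<notin> NR" using pk_root[OF k4] .
      with dV have a2: "d \<in> FV" by (simp add: FV_iff)
      have a3: "card (N d) \<ge> 3" using pk_deg(1)[OF k4] by simp
      show ?thesis using a1 a2 a3 by blast
    qed
    then have sP: "estar d \<in> P" and dF: "d \<in> FV" and d3: "card (N d) \<ge> 3" by blast+
    have "sel d \<in> U" "estar (sel d) = estar d" using selU[OF dF sP] selp[OF dF] by blast+
    moreover have "sel d = d"
    proof (rule ccontr)
      assume "sel d \<noteq> d"
      then have "N d \<subseteq> {sel d}" using star_same selp[OF dF] by blast
      then have "card (N d) \<le> 1" using card_mono[of "{sel d}" "N d"] by simp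
      then show False using d3 by simp
    qed
    ultimately show "d \<in> U" by simp
  qed
  have rt: "R_tri V E \<subseteq> W"
  proof
    fix c assume "c \<in> R_tri V E"
    then obtain a b where h: "pt a b c" unfolding Rtri_iff by blast
    have "c \<in> V" using h by (simp add: pendant_triangle_def)
    then have cF: "c \<in> FV" using pt_root[OF h] FV_iff by blast
    have "estar c \<notin> P" using pt_star[OF P h] .
    then have "c \<notin> U" using UP by blast
    then show "c \<in> W" using cF unfolding W_def by blast
  qed
  have rc: "\<forall>u\<in>U - R_K4 V E. strong_vertex (del_V FV (NF u \<inter> R_tri V E)) (del_E FE (NF u \<inter> R_tri V E)) u"
  proof
    fix u assume u: "u \<in> U - R_K4 V E"
    have "u \<notin> R_tri V E" using u rt unfolding W_def by blast
    then show "strong_vertex (del_V FV (NF u \<inter> R_tri V E)) (del_E FE (NF u \<inter> R_tri V E)) u"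
      using tr_fwd UP(2) Ustrong u by blast
  qed
  show ?thesis using bp ra rt rc by blast
qed

end

theorem mainTheorem17:
  fixes V :: "'a set" and E :: "'a set set"
  assumes "graph V E" and "connected_graph V E"
  shows "localizable E (line_edges E) \<longleftrightarrow>
    ((\<not> isomorphic V E (K_V 3) (K_E 3) \<and> \<not> isomorphic V E (K_V 4) (K_E 4) \<and>
      \<not> isomorphic V E diamond_V diamond_E \<and>
      connected_graph (pr_V V E) (pr_E V E) \<and>
      (\<exists>U W. bipartition (pr_V V E) (pr_E V E) U W \<and>
         R_dia V E \<union> R_K4 V E \<subseteq> U \<and>
         R_tri V E \<subseteq> W \<and>
         (\<forall>u \<in> U - R_K4 V E.
            strong_vertex
              (del_V (pr_V V E) (nbhd (pr_V V E) (pr_E V E) u \<inter> R_tri V E))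
              (del_E (pr_E V E) (nbhd (pr_V V E) (pr_E V E) u \<inter> R_tri V E)) u)))
     \<or> isomorphic V E (K_V 3) (K_E 3) \<or> isomorphic V E (K_V 4) (K_E 4))"
proof -
  interpret sg V E by (rule sg.intro) (rule assms(1))
  have K3: "isomorphic V E (K_V 3) (K_E 3) \<longleftrightarrow> card V = 3 \<and> (\<forall>u\<in>V. \<forall>v\<in>V. u \<noteq> v \<longrightarrow> {u,v} \<in> E)"
    by (rule iso_K)
  have K4: "isomorphic V E (K_V 4) (K_E 4) \<longleftrightarrow> card V = 4 \<and> (\<forall>u\<in>V. \<forall>v\<in>V. u \<noteq> v \<longrightarrow> {u,v} \<in> E)"
    by (rule iso_K)
  show ?thesis
  proof
    assume loc: "localizable E (line_edges E)"
    show "(\<not> isomorphic V E (K_V 3) (K_E 3) \<and> \<not> isomorphic V E (K_V 4) (K_E 4) \<and>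
      \<not> isomorphic V E diamond_V diamond_E \<and>
      connected_graph (pr_V V E) (pr_E V E) \<and>
      (\<exists>U W. bipartition (pr_V V E) (pr_E V E) U W \<and>
         R_dia V E \<union> R_K4 V E \<subseteq> U \<and>
         R_tri V E \<subseteq> W \<and>
         (\<forall>u \<in> U - R_K4 V E.
            strong_vertex
              (del_V (pr_V V E) (nbhd (pr_V V E) (pr_E V E) u \<inter> R_tri V E))
              (del_E (pr_E V E) (nbhd (pr_V V E) (pr_E V E) u \<inter> R_tri V E)) u)))
     \<or> isomorphic V E (K_V 3) (K_E 3) \<or> isomorphic V E (K_V 4) (K_E 4)"
    proof (cases "isomorphic V E (K_V 3) (K_E 3) \<or> isomorphic V E (K_V 4) (K_E 4)")
      case True then show ?thesis by blast
    next
      case False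
      then have n3: "\<not>(card V = 3 \<and> (\<forall>u\<in>V. \<forall>v\<in>V. u \<noteq> v \<longrightarrow> {u,v} \<in> E))"
        and n4: "\<not>(card V = 4 \<and> (\<forall>u\<in>V. \<forall>v\<in>V. u \<noteq> v \<longrightarrow> {u,v} \<in> E))" using K3 K4 by blast+
      have nd: "\<not> isomorphic V E diamond_V diamond_E"
      proof
        assume "isomorphic V E diamond_V diamond_E"
        then obtain a b c d where "distinct [a,b,c,d]" "V = {a,b,c,d}" "E = {{a,b},{a,c},{b,c},{b,d},{c,d}}"
          using iso_dia by blast
        then show False using dia_notloc loc by blast
      qed
      have fc: "connected_graph (pr_V V E) (pr_E V E)" using F_connected[OF assms(2)] .
      have ex: "\<exists>U W. bipartition FV FE U W \<and> R_dia V E \<union> R_K4 V E \<subseteq> U \<and> R_tri V E \<subseteq> W \<and>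
        (\<forall>u\<in>U - R_K4 V E. strong_vertex (del_V FV (NF u \<inter> R_tri V E)) (del_E FE (NF u \<inter> R_tri V E)) u)"
        by (rule loc_fwd[OF assms(2) loc n3 n4])
      show ?thesis using False nd fc ex by blast
    qed
  next
    assume R: "(\<not> isomorphic V E (K_V 3) (K_E 3) \<and> \<not> isomorphic V E (K_V 4) (K_E 4) \<and>
      \<not> isomorphic V E diamond_V diamond_E \<and>
      connected_graph (pr_V V E) (pr_E V E) \<and>
      (\<exists>U W. bipartition (pr_V V E) (pr_E V E) U W \<and>
         R_dia V E \<union> R_K4 V E \<subseteq> U \<and>
         R_tri V E \<subseteq> W \<and>
         (\<forall>u \<in> U - R_K4 V E.
            strong_vertex
              (del_V (pr_V V E) (nbhd (pr_V V E) (pr_E V E) u \<inter> R_tri V E))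
              (del_E (pr_E V E) (nbhd (pr_V V E) (pr_E V E) u \<inter> R_tri V E)) u)))
     \<or> isomorphic V E (K_V 3) (K_E 3) \<or> isomorphic V E (K_V 4) (K_E 4)"
    show "localizable E (line_edges E)"
    proof (cases "E = {}")
      case True
      have "partition_on E {}" using True by (simp add: partition_on_empty)
      then show ?thesis unfolding localizable_def by blast
    next
      case ne: False
      from R show ?thesis
      proof (elim disjE)
        assume "isomorphic V E (K_V 3) (K_E 3)"
        then show ?thesis using K3 K3_loc by blast
      next
        assume "isomorphic V E (K_V 4) (K_E 4)"
        then show ?thesis using K4 K4_loc by blast
      next
        assume h: "\<not> isomorphic V E (K_V 3) (K_E 3) \<and> \<not> isomorphic V E (K_V 4) (K_E 4) \<and>
          \<not> isomorphic V E diamond_V diamond_E \<and>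
          connected_graph (pr_V V E) (pr_E V E) \<and>
          (\<exists>U W. bipartition (pr_V V E) (pr_E V E) U W \<and>
             R_dia V E \<union> R_K4 V E \<subseteq> U \<and>
             R_tri V E \<subseteq> W \<and>
             (\<forall>u \<in> U - R_K4 V E.
                strong_vertex
                  (del_V (pr_V V E) (nbhd (pr_V V E) (pr_E V E) u \<inter> R_tri V E))
                  (del_E (pr_E V E) (nbhd (pr_V V E) (pr_E V E) u \<inter> R_tri V E)) u))"
        then obtain U W where UW: "bipartition (pr_V V E) (pr_E V E) U W"
          "R_dia V E \<union> R_K4 V E \<subseteq> U" "R_tri V E \<subseteq> W"
          "\<forall>u \<in> U - R_K4 V E. strong_vertex
                  (del_V (pr_V V E) (nbhd (pr_V V E) (pr_E V E) u \<inter> R_tri V E))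
                  (del_E (pr_E V E) (nbhd (pr_V V E) (pr_E V E) u \<inter> R_tri V E)) u" by blast
        interpret b: bip V E U W by unfold_locales (use UW in auto)
        show ?thesis using b.loc_bip[OF UW(4) assms(2) ne] .
      qed
    qed
  qed
qed

end
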